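(* The axiom system $\mathbf{AX}^{lp}=\{\mathrm{Taut},\mathrm{MP},\mathrm{Ineq},E5,E6,E7,E8\}$ is sound and complete for $\mathcal{L}^E$ with respect to $\mathcal{M}^{lp}$: a formula of $\mathcal{L}^E$ is provable in $\mathbf{AX}^{lp}$ iff it is true in every lower probability structure.
   Context: Language $\mathcal L^E$: fix primitive propositions $\Phi_0$; propositional formulas built with $\neg,\wedge$; $\mathit{true}$ a tautology, $\mathit{false}=\neg\mathit{true}$. A propositional gamble is $b_1\phi_1+\cdots+b_n\phi_n$ (integers $b_i$); sums and integer multiples are formed termwise, $\phi$ identified with $1\phi$. Formulas are Boolean combinations of expectation inequalities $a_1e(\gamma_1)+\cdots+a_ke(\gamma_k)\ge b$ (integers $a_i,b$); $t\le b$ abbreviates $-t\ge-b$, $t>b$ abbreviates $\neg(t\le b)$, $t=b$ abbreviates $t\ge b\wedge t\le b$, $t_1\ge t_2$ abbreviates $t_1-t_2\ge0$. A lower probability structure is $M=(W,\mathcal F,\mathcal P,\pi)$: $W$ a nonempty set, $\mathcal F$ an algebra on $W$, $\mathcal P$ a set of probability measures on $\mathcal F$, $\pi$ a truth assignment to $\Phi_0$ at each world with every $\{w:\pi(w)(p)=\text{true}\}\in\mathcal F$; $[\![\phi]\!]_M$ is the set of worlds satisfying $\phi$, $[\![\sum b_i\phi_i]\!]_M=\sum b_iX_{[\![\phi_i]\!]_M}$, and $M\models\sum a_ie(\gamma_i)\ge b$ iff $\sum a_i\underline E_{\mathcal P}([\![\gamma_i]\!]_M)\ge b$ where $\underline E_{\mathcal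 P}(X)=\inf_{\mu\in\mathcal P}E_\mu(X)$; Boolean connectives classical. $\mathcal M^{lp}$ is the class of such structures. Axioms: Taut: all instances in $\mathcal L^E$ of propositional tautologies. MP: from $f$ and $f\Rightarrow g$ infer $g$. Ineq: all instances of valid formulas about linear inequalities, i.e. Boolean combinations of inequalities $c_1x_1+\cdots+c_nx_n\ge c$ true under every assignment of reals to the variables, with each variable $x_i$ uniformly replaced by a term $e(\gamma_i)$. E5: $e(\gamma_1)\le e(\gamma_2)$ whenever $\gamma_1\le\gamma_2$ is a valid gamble inequality, i.e. $[\![\gamma_1]\!]_M(w)\le[\![\gamma_2]\!]_M(w)$ for every nonempty set of worlds with truth assignment and every world $w$. E6: $e(\gamma_1+\gamma_2)\ge e(\gamma_1)+e(\gamma_2)$. E7: $e(a\gamma+b\,\mathit{true})=ae(\gamma)+b$ for $a\ge0$. E8: $e(a\gamma+b\,\mathit{false})=ae(\gamma)$ for $a\ge0$. *)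

theory Defs
  imports "HOL-Analysis.Analysis"
begin

datatype 'p pform = Prim 'p | PNeg "'p pform" | PAnd "'p pform" "'p pform"

primrec peval :: "('p \<Rightarrow> bool) \<Rightarrow> 'p pform \<Rightarrow> bool" where
  "peval v (Prim p) = v p"
| "peval v (PNeg f) = (\<not> peval v f)"
| "peval v (PAnd f g) = (peval v f \<and> peval v g)"

definition ptrue :: "'p pform" where
  "ptrue = PNeg (PAnd (Prim undefined) (PNeg (Prim undefined)))"

definition pfalse :: "'p pform" where
  "pfalse = PNeg ptrue"

text \<open>A gamble b1 phi1 + ... + bn phin is the list of its terms.\<close>
type_synonym 'p gamble = "(int \<times> 'p pform) list"

definition gplus :: "'p gamble \<Rightarrow> 'p gamble \<Rightarrow> 'p gamble" where
  "gplus g1 g2 = g1 @ g2"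

definition gscale :: "int \<Rightarrow> 'p gamble \<Rightarrow> 'p gamble" where
  "gscale a g = map (\<lambda>(b, f). (a * b, f)) g"

definition gval :: "('p \<Rightarrow> bool) \<Rightarrow> 'p gamble \<Rightarrow> real" where
  "gval v g = (\<Sum>(b, f)\<leftarrow>g. real_of_int b * (if peval v f then 1 else 0))"

text \<open>Valid gamble inequality: holds at every world of every set of worlds with
  truth assignment; the value at a world depends only on its truth assignment.\<close>
definition gamble_le :: "'p gamble \<Rightarrow> 'p gamble \<Rightarrow> bool" where
  "gamble_le g1 g2 = (\<forall>v. gval v g1 \<le> gval v g2)"

text \<open>A term a1 e(g1) + ... + ak e(gk) is the list of pairs (ai, gi).\<close>
type_synonym 'p eterm = "(int \<times> 'p gamble) list"

datatype 'p lfml =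
    EIneq "'p eterm" int      \<comment> \<open>a1 e(g1) + ... + ak e(gk) \<ge> b\<close>
  | ENeg "'p lfml"
  | EAnd "'p lfml" "'p lfml"

definition EImp :: "'p lfml \<Rightarrow> 'p lfml \<Rightarrow> 'p lfml" where
  "EImp f g = ENeg (EAnd f (ENeg g))"

definition tneg :: "'p eterm \<Rightarrow> 'p eterm" where
  "tneg t = map (\<lambda>(a, g). (- a, g)) t"

definition tminus :: "'p eterm \<Rightarrow> 'p eterm \<Rightarrow> 'p eterm" where
  "tminus t1 t2 = t1 @ tneg t2"

definition ELe :: "'p eterm \<Rightarrow> int \<Rightarrow> 'p lfml" where
  "ELe t b = EIneq (tneg t) (- b)"

definition EEq :: "'p eterm \<Rightarrow> int \<Rightarrow> 'p lfml" where
  "EEq t b = EAnd (EIneq t b) (ELe t b)"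

definition EGeq :: "'p eterm \<Rightarrow> 'p eterm \<Rightarrow> 'p lfml" where
  "EGeq t1 t2 = EIneq (tminus t1 t2) 0"

record ('w, 'p) lp_struct =
  lpW  :: "'w set"
  lpF  :: "'w set set"
  lpP  :: "('w set \<Rightarrow> real) set"
  lpPi :: "'w \<Rightarrow> 'p \<Rightarrow> bool"

definition prob_measure_on :: "'w set \<Rightarrow> 'w set set \<Rightarrow> ('w set \<Rightarrow> real) \<Rightarrow> bool" where
  "prob_measure_on W F \<mu> \<longleftrightarrow>
     (\<forall>A\<in>F. 0 \<le> \<mu> A) \<and> \<mu> W = 1 \<and>
     (\<forall>A\<in>F. \<forall>B\<in>F. A \<inter> B = {} \<longrightarrow> \<mu> (A \<union> B) = \<mu> A + \<mu> B)"

definition lp_structure :: "('w, 'p) lp_struct \<Rightarrow> bool" where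
  "lp_structure M \<longleftrightarrow>
     lpW M \<noteq> {} \<and> algebra (lpW M) (lpF M) \<and> lpP M \<noteq> {} \<and>
     (\<forall>\<mu>\<in>lpP M. prob_measure_on (lpW M) (lpF M) \<mu>) \<and>
     (\<forall>p. {w \<in> lpW M. lpPi M w p} \<in> lpF M)"

text \<open>Expectation of a simple (finite-range) random variable X on W w.r.t. mu.\<close>
definition expect :: "'w set \<Rightarrow> ('w set \<Rightarrow> real) \<Rightarrow> ('w \<Rightarrow> real) \<Rightarrow> real" where
  "expect W \<mu> X = (\<Sum>x\<in>X ` W. x * \<mu> {w \<in> W. X w = x})"

definition lower_expect :: "('w, 'p) lp_struct \<Rightarrow> ('w \<Rightarrow> real) \<Rightarrow> real" where
  "lower_expect M X = (INF \<mu>\<in>lpP M. expect (lpW M) \<mu> X)"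

definition gsem :: "('w, 'p) lp_struct \<Rightarrow> 'p gamble \<Rightarrow> 'w \<Rightarrow> real" where
  "gsem M g = (\<lambda>w. gval (lpPi M w) g)"

primrec lsat :: "('w, 'p) lp_struct \<Rightarrow> 'p lfml \<Rightarrow> bool" where
  "lsat M (EIneq t b) =
     ((\<Sum>(a, g)\<leftarrow>t. real_of_int a * lower_expect M (gsem M g)) \<ge> real_of_int b)"
| "lsat M (ENeg f) = (\<not> lsat M f)"
| "lsat M (EAnd f g) = (lsat M f \<and> lsat M g)"

definition lp_valid :: "'w itself \<Rightarrow> 'p lfml \<Rightarrow> bool" where
  "lp_valid _ f = (\<forall>M :: ('w, 'p) lp_struct. lp_structure M \<longrightarrow> lsat M f)"

definition tautology :: "nat pform \<Rightarrow> bool" where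
  "tautology \<tau> = (\<forall>v. peval v \<tau>)"

primrec pinst :: "(nat \<Rightarrow> 'p lfml) \<Rightarrow> nat pform \<Rightarrow> 'p lfml" where
  "pinst \<sigma> (Prim i) = \<sigma> i"
| "pinst \<sigma> (PNeg f) = ENeg (pinst \<sigma> f)"
| "pinst \<sigma> (PAnd f g) = EAnd (pinst \<sigma> f) (pinst \<sigma> g)"

text \<open>Boolean combinations of linear inequalities c1 x_i1 + ... + cn x_in \<ge> c over
  real variables x_i (i :: nat), and their validity.\<close>
datatype linfml =
    LIneq "(int \<times> nat) list" int
  | LNeg linfml
  | LAnd linfml linfml

primrec linsat :: "(nat \<Rightarrow> real) \<Rightarrow> linfml \<Rightarrow> bool" where
  "linsat x (LIneq cs c) = ((\<Sum>(a, i)\<leftarrow>cs. real_of_int a * x i) \<ge> real_of_int c)"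
| "linsat x (LNeg f) = (\<not> linsat x f)"
| "linsat x (LAnd f g) = (linsat x f \<and> linsat x g)"

definition lin_valid :: "linfml \<Rightarrow> bool" where
  "lin_valid f = (\<forall>x. linsat x f)"

primrec linst :: "(nat \<Rightarrow> 'p gamble) \<Rightarrow> linfml \<Rightarrow> 'p lfml" where
  "linst \<sigma> (LIneq cs c) = EIneq (map (\<lambda>(a, i). (a, \<sigma> i)) cs) c"
| "linst \<sigma> (LNeg f) = ENeg (linst \<sigma> f)"
| "linst \<sigma> (LAnd f g) = EAnd (linst \<sigma> f) (linst \<sigma> g)"

inductive AX_lp :: "'p lfml \<Rightarrow> bool" where
  Taut: "tautology \<tau> \<Longrightarrow> AX_lp (pinst \<sigma> \<tau>)"
| MP:   "AX_lp f \<Longrightarrow> AX_lp (EImp f g) \<Longrightarrow> AX_lp g"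
| Ineq: "lin_valid \<psi> \<Longrightarrow> AX_lp (linst \<sigma> \<psi>)"
| E5:   "gamble_le g1 g2 \<Longrightarrow> AX_lp (EGeq [(1, g2)] [(1, g1)])"
| E6:   "AX_lp (EGeq [(1, gplus g1 g2)] [(1, g1), (1, g2)])"
| E7:   "a \<ge> 0 \<Longrightarrow>
         AX_lp (EEq (tminus [(1, gplus (gscale a g) [(b, ptrue)])] [(a, g)]) b)"
| E8:   "a \<ge> 0 \<Longrightarrow>
         AX_lp (EEq (tminus [(1, gplus (gscale a g) [(b, pfalse)])] [(a, g)]) 0)"

end

theory Submission
  imports Defs
begin


lemma peval_ptrue[simp]: "peval v ptrue" by (simp add: ptrue_def)
lemma peval_pfalse[simp]: "\<not> peval v pfalse" by (simp add: pfalse_def)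

lemma gval_append[simp]: "gval v (g1 @ g2) = gval v g1 + gval v g2"
  by (simp add: gval_def)
lemma gval_Nil[simp]: "gval v [] = 0" by (simp add: gval_def)
lemma gval_Cons[simp]: "gval v ((b,f) # g) = real_of_int b * (if peval v f then 1 else 0) + gval v g"
  by (simp add: gval_def)
lemma gval_gscale[simp]: "gval v (gscale a g) = real_of_int a * gval v g"
  by (induction g) (auto simp: gscale_def algebra_simps)
lemma gval_gplus[simp]: "gval v (gplus g1 g2) = gval v g1 + gval v g2"
  by (simp add: gplus_def)

primrec pprops :: "'p pform \<Rightarrow> 'p set" where
  "pprops (Prim p) = {p}" | "pprops (PNeg f) = pprops f" | "pprops (PAnd f g) = pprops f \<union> pprops g"

lemma finite_pprops[simp]: "finite (pprops f)" by (induction f) auto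

lemma peval_cong: "(\<And>q. q \<in> pprops f \<Longrightarrow> v q = v' q) \<Longrightarrow> peval v f = peval v' f"
  by (induction f) auto

definition gprops :: "'p gamble \<Rightarrow> 'p set" where
  "gprops g = (\<Union>x\<in>set g. pprops (snd x))"

lemma finite_gprops[simp]: "finite (gprops g)" by (simp add: gprops_def)

lemma gval_cong: "(\<And>q. q \<in> gprops g \<Longrightarrow> v q = v' q) \<Longrightarrow> gval v g = gval v' g"
proof (induction g)
  case Nil then show ?case by simp
next
  case (Cons a g)
  obtain b f where a: "a = (b,f)" by (cases a)
  have "peval v f = peval v' f" using Cons.prems by (intro peval_cong) (auto simp: gprops_def a)
  moreover have "gval v g = gval v' g" using Cons by (auto simp: gprops_def)
  ultimately show ?case by (simp add: a)
qed


section \<open>Finite additivity\<close>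

lemma alg_facts:
  assumes "algebra W F"
  shows "{} \<in> F" "W \<in> F" "\<And>a. a \<in> F \<Longrightarrow> W - a \<in> F"
    "\<And>a b. a \<in> F \<Longrightarrow> b \<in> F \<Longrightarrow> a \<union> b \<in> F"
    "\<And>a b. a \<in> F \<Longrightarrow> b \<in> F \<Longrightarrow> a \<inter> b \<in> F"
    "F \<subseteq> Pow W"
proof -
  have I: "F \<subseteq> Pow W \<and> {} \<in> F \<and> (\<forall>a \<in> F. W - a \<in> F) \<and> (\<forall>a \<in> F. \<forall> b \<in> F. a \<inter> b \<in> F)"
    using assms unfolding algebra_iff_Int by blast
  have U: "(\<forall>a \<in> F. \<forall> b \<in> F. a \<union> b \<in> F)"
    using assms unfolding algebra_iff_Un by blast
  show "{} \<in> F" "\<And>a. a \<in> F \<Longrightarrow> W - a \<in> F" "\<And>a b. a \<in> F \<Longrightarrow> b \<in> F \<Longrightarrow> a \<inter> b \<in> F"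
    "F \<subseteq> Pow W" "\<And>a b. a \<in> F \<Longrightarrow> b \<in> F \<Longrightarrow> a \<union> b \<in> F" using I U by auto
  then show "W \<in> F" by (metis Diff_empty)
qed

lemma pm_empty:
  assumes "algebra W F" "prob_measure_on W F \<mu>"
  shows "\<mu> {} = 0"
proof -
  have "{} \<in> F" using assms(1) by (simp add: alg_facts)
  then have "\<mu> ({} \<union> {}) = \<mu> {} + \<mu> {}" using assms(2) unfolding prob_measure_on_def by blast
  then show ?thesis by simp
qed

lemma pm_finite_UN:
  assumes alg: "algebra W F" and pm: "prob_measure_on W F \<mu>" and "finite S"
    "\<And>A. A \<in> S \<Longrightarrow> C A \<in> F" "disjoint_family_on C S"
  shows "\<mu> (\<Union>A\<in>S. C A) = (\<Sum>A\<in>S. \<mu> (C A)) \<and> (\<Union>A\<in>S. C A) \<in> F"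
  using assms(3-5)
proof (induction S rule: finite_induct)
  case empty then show ?case using pm_empty[OF alg pm] alg_facts(1)[OF alg] by simp
next
  case (insert a S)
  have d: "disjoint_family_on C S"
    using insert.prems(2) by (rule disjoint_family_on_mono[rotated]) auto
  have IH: "\<mu> (\<Union>A\<in>S. C A) = (\<Sum>A\<in>S. \<mu> (C A))" "(\<Union>A\<in>S. C A) \<in> F"
    using insert.IH[OF _ d] insert.prems(1) by auto
  have disj: "C a \<inter> (\<Union>A\<in>S. C A) = {}" 
  proof -
    have "C a \<inter> C b = {}" if "b \<in> S" for b
      using insert.prems(2) insert.hyps(2) that unfolding disjoint_family_on_def
      by (metis insertCI)
    then show ?thesis by blast
  qed
  have Ca: "C a \<in> F" using insert.prems(1) by simp
  have add: "\<forall>A\<in>F. \<forall>B\<in>F. A \<inter> B = {} \<longrightarrow> \<mu> (A \<union> B) = \<mu> A + \<mu> B"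
    using pm unfolding prob_measure_on_def by blast
  have "\<mu> (C a \<union> (\<Union>A\<in>S. C A)) = \<mu> (C a) + \<mu> (\<Union>A\<in>S. C A)"
    using add disj Ca IH(2) by blast
  moreover have "C a \<union> (\<Union>A\<in>S. C A) \<in> F" using alg_facts(4)[OF alg Ca IH(2)] .
  ultimately show ?case using IH insert.hyps by simp
qed

lemma expect_atoms:
  assumes alg: "algebra W F" and pm: "prob_measure_on W F \<mu>" and fin: "finite Ats"
    and al: "\<And>w. w \<in> W \<Longrightarrow> \<alpha> w \<in> Ats"
    and cells: "\<And>A. A \<in> Ats \<Longrightarrow> {w\<in>W. \<alpha> w = A} \<in> F"
    and X: "\<And>w. w \<in> W \<Longrightarrow> X w = h (\<alpha> w)"
  shows "expect W \<mu> X = (\<Sum>A\<in>Ats. h A * \<mu> {w\<in>W. \<alpha> w = A})"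
proof -
  let ?C = "\<lambda>A. {w\<in>W. \<alpha> w = A}"
  have lev: "\<mu> {w\<in>W. X w = y} = (\<Sum>A\<in>{A\<in>Ats. h A = y}. \<mu> (?C A))" for y
  proof -
    have "{w\<in>W. X w = y} = (\<Union>A\<in>{A\<in>Ats. h A = y}. ?C A)"
    proof (intro set_eqI iffI)
      fix w assume "w \<in> {w\<in>W. X w = y}"
      then have w: "w \<in> W" "X w = y" by auto
      show "w \<in> (\<Union>A\<in>{A\<in>Ats. h A = y}. ?C A)"
        by (rule UN_I[of "\<alpha> w"]) (use w al X in auto)
    next
      fix w assume "w \<in> (\<Union>A\<in>{A\<in>Ats. h A = y}. ?C A)"
      then obtain A where "A \<in> Ats" "h A = y" "w \<in> W" "\<alpha> w = A" by auto
      then show "w \<in> {w\<in>W. X w = y}" using X[of w] by auto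
    qed
    moreover have "disjoint_family_on ?C {A\<in>Ats. h A = y}"
      by (auto simp: disjoint_family_on_def)
    ultimately show ?thesis using pm_finite_UN[OF alg pm, of "{A\<in>Ats. h A = y}" ?C] fin cells by auto
  qed
  have sub: "X ` W \<subseteq> h ` Ats" using al X by auto
  have "(\<Sum>A\<in>Ats. h A * \<mu> (?C A)) = (\<Sum>y\<in>h ` Ats. \<Sum>A\<in>{A\<in>Ats. h A = y}. h A * \<mu> (?C A))"
    using sum.image_gen[OF fin] by blast
  also have "\<dots> = (\<Sum>y\<in>h ` Ats. y * \<mu> {w\<in>W. X w = y})"
    by (intro sum.cong refl) (auto simp: lev sum_distrib_left)
  also have "\<dots> = (\<Sum>y\<in>X ` W. y * \<mu> {w\<in>W. X w = y})"
  proof (rule sum.mono_neutral_right)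
    show "finite (h ` Ats)" using fin by simp
    show "X ` W \<subseteq> h ` Ats" by (rule sub)
    show "\<forall>i\<in>h ` Ats - X ` W. i * \<mu> {w \<in> W. X w = i} = 0"
    proof
      fix y assume "y \<in> h ` Ats - X ` W"
      then have "y \<notin> X ` W" by simp
      then have e: "{w \<in> W. X w = y} = {}" by blast
      show "y * \<mu> {w \<in> W. X w = y} = 0" by (simp only: e pm_empty[OF alg pm] mult_zero_right)
    qed
  qed
  finally show ?thesis unfolding expect_def by simp
qed


section \<open>Soundness\<close>

lemma sets_finite_All:
  assumes alg: "algebra W F" and "finite Pr" and "\<And>q. q \<in> Pr \<Longrightarrow> {w\<in>W. P q w} \<in> F"
  shows "{w\<in>W. \<forall>q\<in>Pr. P q w} \<in> F"
  using assms(2,3)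
proof (induction Pr rule: finite_induct)
  case empty then show ?case using alg_facts(2)[OF alg] by simp
next
  case (insert a Pr)
  have "{w\<in>W. \<forall>q\<in>insert a Pr. P q w} = {w\<in>W. P a w} \<inter> {w\<in>W. \<forall>q\<in>Pr. P q w}" by auto
  then show ?case using alg_facts(5)[OF alg] insert by simp
qed

definition acell :: "('w, 'p) lp_struct \<Rightarrow> 'p set \<Rightarrow> 'p set \<Rightarrow> 'w set" where
  "acell M Pr A = {w \<in> lpW M. {q\<in>Pr. lpPi M w q} = A}"

lemma acell_in:
  assumes M: "lp_structure M" and fin: "finite Pr"
  shows "acell M Pr A \<in> lpF M"
proof -
  have alg: "algebra (lpW M) (lpF M)" using M by (simp add: lp_structure_def)
  show ?thesis
  proof (cases "A \<subseteq> Pr")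
    case False
    then have "acell M Pr A = {}" by (auto simp: acell_def)
    then show ?thesis using alg_facts(1)[OF alg] by simp
  next
    case True
    have "acell M Pr A = {w\<in>lpW M. \<forall>q\<in>Pr. (lpPi M w q \<longleftrightarrow> q \<in> A)}"
      using True by (auto simp: acell_def)
    also have "\<dots> \<in> lpF M"
    proof (rule sets_finite_All[OF alg fin])
      fix q
      have S: "{w\<in>lpW M. lpPi M w q} \<in> lpF M" using M by (simp add: lp_structure_def)
      show "{w\<in>lpW M. (lpPi M w q \<longleftrightarrow> q \<in> A)} \<in> lpF M"
      proof (cases "q \<in> A")
        case True then show ?thesis using S by simp
      next
        case False
        have "{w\<in>lpW M. (lpPi M w q \<longleftrightarrow> q \<in> A)} = lpW M - {w\<in>lpW M. lpPi M w q}"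
          using False by auto
        then show ?thesis using alg_facts(3)[OF alg S] by simp
      qed
    qed
    finally show ?thesis .
  qed
qed

definition ex :: "('w, 'p) lp_struct \<Rightarrow> 'p set \<Rightarrow> ('w set \<Rightarrow> real) \<Rightarrow> 'p gamble \<Rightarrow> real" where
  "ex M Pr \<mu> g = (\<Sum>A\<in>Pow Pr. gval (\<lambda>q. q \<in> A) g * \<mu> (acell M Pr A))"

lemma expect_ex:
  assumes M: "lp_structure M" and fin: "finite Pr" and mu: "\<mu> \<in> lpP M"
    and X: "\<And>w. w \<in> lpW M \<Longrightarrow> X w = h {q\<in>Pr. lpPi M w q}"
  shows "expect (lpW M) \<mu> X = (\<Sum>A\<in>Pow Pr. h A * \<mu> (acell M Pr A))"
proof -
  have alg: "algebra (lpW M) (lpF M)" and pm: "prob_measure_on (lpW M) (lpF M) \<mu>"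
    using M mu by (auto simp: lp_structure_def)
  show ?thesis unfolding acell_def
    by (rule expect_atoms[OF alg pm]) (use fin X acell_in[OF M fin] in \<open>auto simp: acell_def\<close>)
qed

lemma expect_gsem:
  assumes M: "lp_structure M" and fin: "finite Pr" and mu: "\<mu> \<in> lpP M" and g: "gprops g \<subseteq> Pr"
  shows "expect (lpW M) \<mu> (gsem M g) = ex M Pr \<mu> g"
  unfolding ex_def
proof (rule expect_ex[OF M fin mu])
  fix w
  show "gsem M g w = gval (\<lambda>q. q \<in> {q \<in> Pr. lpPi M w q}) g"
    unfolding gsem_def by (rule gval_cong) (use g in auto)
qed

lemma mu_sum:
  assumes M: "lp_structure M" and fin: "finite Pr" and mu: "\<mu> \<in> lpP M"
  shows "(\<Sum>A\<in>Pow Pr. \<mu> (acell M Pr A)) = 1"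
proof -
  have "expect (lpW M) \<mu> (\<lambda>_. 1) = (\<Sum>A\<in>Pow Pr. 1 * \<mu> (acell M Pr A))"
    by (rule expect_ex[OF M fin mu]) simp
  moreover have "expect (lpW M) \<mu> (\<lambda>_. 1) = 1"
  proof -
    have ne: "lpW M \<noteq> {}" using M by (simp add: lp_structure_def)
    then have "(\<lambda>_. 1::real) ` lpW M = {1}" by auto
    moreover have "\<mu> (lpW M) = 1" using M mu by (auto simp: lp_structure_def prob_measure_on_def)
    ultimately show ?thesis by (simp add: expect_def)
  qed
  ultimately show ?thesis by simp
qed

lemma mu_nonneg:
  assumes M: "lp_structure M" and fin: "finite Pr" and mu: "\<mu> \<in> lpP M"
  shows "\<mu> (acell M Pr A) \<ge> 0"
  using acell_in[OF M fin, of A] M mu by (auto simp: lp_structure_def prob_measure_on_def)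

lemma mu_le1:
  assumes M: "lp_structure M" and fin: "finite Pr" and mu: "\<mu> \<in> lpP M" and A: "A \<in> Pow Pr"
  shows "\<mu> (acell M Pr A) \<le> 1"
proof -
  have "\<mu> (acell M Pr A) \<le> (\<Sum>A\<in>Pow Pr. \<mu> (acell M Pr A))"
    by (rule member_le_sum) (use A fin mu_nonneg[OF M fin mu] in auto)
  then show ?thesis using mu_sum[OF M fin mu] by simp
qed

lemma ex_lower:
  assumes M: "lp_structure M" and fin: "finite Pr" and mu: "\<mu> \<in> lpP M"
  shows "ex M Pr \<mu> g \<ge> - (\<Sum>A\<in>Pow Pr. \<bar>gval (\<lambda>q. q \<in> A) g\<bar>)"
proof -
  have "(\<Sum>A\<in>Pow Pr. - \<bar>gval (\<lambda>q. q \<in> A) g\<bar>) \<le> ex M Pr \<mu> g"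
    unfolding ex_def
  proof (rule sum_mono)
    fix A assume A: "A \<in> Pow Pr"
    have m0: "\<mu> (acell M Pr A) \<ge> 0" and m1: "\<mu> (acell M Pr A) \<le> 1"
      using mu_nonneg[OF M fin mu] mu_le1[OF M fin mu A] by auto
    have "- \<bar>gval (\<lambda>q. q \<in> A) g\<bar> \<le> - \<bar>gval (\<lambda>q. q \<in> A) g\<bar> * \<mu> (acell M Pr A)"
      using m0 m1 by (simp add: mult_left_le)
    also have "\<dots> \<le> gval (\<lambda>q. q \<in> A) g * \<mu> (acell M Pr A)"
      using m0 by (intro mult_right_mono) auto
    finally show "- \<bar>gval (\<lambda>q. q \<in> A) g\<bar> \<le> gval (\<lambda>q. q \<in> A) g * \<mu> (acell M Pr A)" .
  qed
  then show ?thesis by (simp add: sum_negf)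
qed

lemma lower_expect_ex:
  assumes M: "lp_structure M" and fin: "finite Pr" and g: "gprops g \<subseteq> Pr"
  shows "lower_expect M (gsem M g) = (INF \<mu>\<in>lpP M. ex M Pr \<mu> g)"
  unfolding lower_expect_def using expect_gsem[OF M fin _ g] by simp

lemma bdd_ex:
  assumes M: "lp_structure M" and fin: "finite Pr"
  shows "bdd_below ((\<lambda>\<mu>. ex M Pr \<mu> g) ` lpP M)"
  using ex_lower[OF M fin] by (auto intro!: bdd_belowI2)


lemma inf_mono':
  fixes f g :: "'m \<Rightarrow> real"
  assumes "P \<noteq> {}" "bdd_below (f ` P)" "\<And>\<mu>. \<mu> \<in> P \<Longrightarrow> f \<mu> \<le> g \<mu>"
  shows "(INF \<mu>\<in>P. f \<mu>) \<le> (INF \<mu>\<in>P. g \<mu>)"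
  by (rule cINF_mono[OF assms(1,2)]) (use assms(3) in blast)

lemma inf_add:
  fixes f g :: "'m \<Rightarrow> real"
  assumes "P \<noteq> {}" "bdd_below (f ` P)" "bdd_below (g ` P)"
  shows "(INF \<mu>\<in>P. f \<mu>) + (INF \<mu>\<in>P. g \<mu>) \<le> (INF \<mu>\<in>P. f \<mu> + g \<mu>)"
proof (rule cINF_greatest[OF assms(1)])
  fix \<mu> assume "\<mu> \<in> P"
  then show "(INF \<mu>\<in>P. f \<mu>) + (INF \<mu>\<in>P. g \<mu>) \<le> f \<mu> + g \<mu>"
    using cINF_lower[OF assms(2)] cINF_lower[OF assms(3)] by (simp add: add_mono)
qed

lemma inf_affine:
  fixes f :: "'m \<Rightarrow> real"
  assumes P: "P \<noteq> {}" and bdd: "bdd_below (f ` P)" and a: "a \<ge> 0"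
  shows "(INF \<mu>\<in>P. a * f \<mu> + b) = a * (INF \<mu>\<in>P. f \<mu>) + b"
proof (cases "a = 0")
  case True then show ?thesis using P by simp
next
  case False
  then have a0: "a > 0" using a by simp
  show ?thesis
  proof (rule antisym)
    show "a * (INF \<mu>\<in>P. f \<mu>) + b \<le> (INF \<mu>\<in>P. a * f \<mu> + b)"
    proof (rule cINF_greatest[OF P])
      fix \<mu> assume "\<mu> \<in> P"
      then have "(INF \<mu>\<in>P. f \<mu>) \<le> f \<mu>" using cINF_lower[OF bdd] by simp
      then show "a * (INF \<mu>\<in>P. f \<mu>) + b \<le> a * f \<mu> + b" using a by (simp add: mult_left_mono)
    qed
  next
    obtain m where m: "\<And>\<mu>. \<mu> \<in> P \<Longrightarrow> m \<le> f \<mu>" using bdd by (auto simp: bdd_below_def)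
    have bdd2: "bdd_below ((\<lambda>\<mu>. a * f \<mu> + b) ` P)"
      by (rule bdd_belowI2[of _ "a * m + b"]) (use m a in \<open>simp add: mult_left_mono\<close>)
    let ?L = "(INF \<mu>\<in>P. a * f \<mu> + b)"
    have "(?L - b) / a \<le> (INF \<mu>\<in>P. f \<mu>)"
    proof (rule cINF_greatest[OF P])
      fix \<mu> assume "\<mu> \<in> P"
      then have "?L \<le> a * f \<mu> + b" using cINF_lower[OF bdd2] by simp
      then show "(?L - b) / a \<le> f \<mu>" using a0 by (simp add: divide_le_eq mult.commute)
    qed
    then show "?L \<le> a * (INF \<mu>\<in>P. f \<mu>) + b" using a0 by (simp add: divide_le_eq mult.commute)
  qed
qed

lemma gprops_append[simp]: "gprops (g1 @ g2) = gprops g1 \<union> gprops g2"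
  by (simp add: gprops_def)
lemma gprops_gscale[simp]: "gprops (gscale a g) = gprops g"
  by (auto simp: gprops_def gscale_def)
lemma gprops_gplus[simp]: "gprops (gplus g1 g2) = gprops g1 \<union> gprops g2"
  by (simp add: gplus_def)

abbreviation LE :: "('w, 'p) lp_struct \<Rightarrow> 'p gamble \<Rightarrow> real" where
  "LE M g \<equiv> lower_expect M (gsem M g)"

lemma P_ne: "lp_structure M \<Longrightarrow> lpP M \<noteq> {}" by (simp add: lp_structure_def)

lemma sound_E5:
  assumes M: "lp_structure M" and le: "gamble_le g1 g2"
  shows "LE M g1 \<le> LE M g2"
proof -
  let ?Pr = "gprops g1 \<union> gprops g2"
  have fin: "finite ?Pr" by simp
  have "(INF \<mu>\<in>lpP M. ex M ?Pr \<mu> g1) \<le> (INF \<mu>\<in>lpP M. ex M ?Pr \<mu> g2)"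
  proof (rule inf_mono'[OF P_ne[OF M] bdd_ex[OF M fin]])
    fix \<mu> assume mu: "\<mu> \<in> lpP M"
    show "ex M ?Pr \<mu> g1 \<le> ex M ?Pr \<mu> g2" unfolding ex_def
      by (rule sum_mono, rule mult_right_mono) (use le mu_nonneg[OF M fin mu] in \<open>auto simp: gamble_le_def\<close>)
  qed
  then show ?thesis using lower_expect_ex[OF M fin] by simp
qed

lemma sound_E6:
  assumes M: "lp_structure M"
  shows "LE M g1 + LE M g2 \<le> LE M (gplus g1 g2)"
proof -
  let ?Pr = "gprops g1 \<union> gprops g2"
  have fin: "finite ?Pr" by simp
  have "ex M ?Pr \<mu> (gplus g1 g2) = ex M ?Pr \<mu> g1 + ex M ?Pr \<mu> g2" for \<mu>
    unfolding ex_def by (simp add: sum.distrib distrib_right)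
  then have "(INF \<mu>\<in>lpP M. ex M ?Pr \<mu> g1) + (INF \<mu>\<in>lpP M. ex M ?Pr \<mu> g2)
     \<le> (INF \<mu>\<in>lpP M. ex M ?Pr \<mu> (gplus g1 g2))"
    using inf_add[OF P_ne[OF M] bdd_ex[OF M fin] bdd_ex[OF M fin]] by simp
  then show ?thesis using lower_expect_ex[OF M fin] by simp
qed

lemma sound_E7:
  assumes M: "lp_structure M" and a: "a \<ge> 0"
  shows "LE M (gplus (gscale a g) [(b, ptrue)]) = of_int a * LE M g + of_int b"
proof -
  let ?Pr = "gprops g \<union> gprops [(b, ptrue)]"
  have fin: "finite ?Pr" by simp
  have "ex M ?Pr \<mu> (gplus (gscale a g) [(b, ptrue)]) = of_int a * ex M ?Pr \<mu> g + of_int b"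
    if mu: "\<mu> \<in> lpP M" for \<mu>
  proof -
    have "ex M ?Pr \<mu> (gplus (gscale a g) [(b, ptrue)]) =
       of_int a * ex M ?Pr \<mu> g + of_int b * (\<Sum>A\<in>Pow ?Pr. \<mu> (acell M ?Pr A))"
      unfolding ex_def by (simp add: sum.distrib distrib_right sum_distrib_left mult.assoc)
    then show ?thesis using mu_sum[OF M fin mu] by simp
  qed
  then have "(INF \<mu>\<in>lpP M. ex M ?Pr \<mu> (gplus (gscale a g) [(b, ptrue)]))
      = (INF \<mu>\<in>lpP M. of_int a * ex M ?Pr \<mu> g + of_int b)" by (intro INF_cong) auto
  also have "\<dots> = of_int a * (INF \<mu>\<in>lpP M. ex M ?Pr \<mu> g) + of_int b"
    by (rule inf_affine[OF P_ne[OF M] bdd_ex[OF M fin]]) (use a in simp)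
  finally show ?thesis using lower_expect_ex[OF M fin] by simp
qed

lemma sound_E8:
  assumes M: "lp_structure M" and a: "a \<ge> 0"
  shows "LE M (gplus (gscale a g) [(b, pfalse)]) = of_int a * LE M g"
proof -
  let ?Pr = "gprops g \<union> gprops [(b, pfalse)]"
  have fin: "finite ?Pr" by simp
  have "ex M ?Pr \<mu> (gplus (gscale a g) [(b, pfalse)]) = of_int a * ex M ?Pr \<mu> g + 0" for \<mu>
    unfolding ex_def by (simp add: sum_distrib_left mult.assoc)
  then have "(INF \<mu>\<in>lpP M. ex M ?Pr \<mu> (gplus (gscale a g) [(b, pfalse)]))
      = (INF \<mu>\<in>lpP M. of_int a * ex M ?Pr \<mu> g + 0)" by (intro INF_cong) auto
  also have "\<dots> = of_int a * (INF \<mu>\<in>lpP M. ex M ?Pr \<mu> g) + 0"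
    by (rule inf_affine[OF P_ne[OF M] bdd_ex[OF M fin]]) (use a in simp)
  finally show ?thesis using lower_expect_ex[OF M fin] by simp
qed

definition tsem :: "('w, 'p) lp_struct \<Rightarrow> 'p eterm \<Rightarrow> real" where
  "tsem M t = (\<Sum>(a, g)\<leftarrow>t. real_of_int a * LE M g)"

lemma lsat_EIneq: "lsat M (EIneq t b) = (tsem M t \<ge> of_int b)"
  by (simp add: tsem_def)

lemma tsem_tneg[simp]: "tsem M (tneg t) = - tsem M t"
  by (induction t) (auto simp: tsem_def tneg_def)

lemma tsem_append[simp]: "tsem M (t1 @ t2) = tsem M t1 + tsem M t2"
  by (simp add: tsem_def)

lemma tsem_Cons[simp]: "tsem M ((a,g) # t) = of_int a * LE M g + tsem M t"
  by (simp add: tsem_def)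
lemma tsem_Nil[simp]: "tsem M [] = 0"
  by (simp add: tsem_def)

lemma lsat_EGeq: "lsat M (EGeq t1 t2) = (tsem M t1 \<ge> tsem M t2)"
  unfolding EGeq_def lsat_EIneq tminus_def by simp

lemma lsat_EEq: "lsat M (EEq t b) = (tsem M t = of_int b)"
  unfolding EEq_def ELe_def lsat.simps(3) lsat_EIneq by auto

lemma lsat_EImp: "lsat M (EImp f g) = (lsat M f \<longrightarrow> lsat M g)"
  by (simp add: EImp_def)

lemma lsat_pinst: "lsat M (pinst \<sigma> \<tau>) = peval (\<lambda>i. lsat M (\<sigma> i)) \<tau>"
  by (induction \<tau>) auto

lemma lsat_linst: "lsat M (linst \<sigma> \<psi>) = linsat (\<lambda>i. LE M (\<sigma> i)) \<psi>"
proof (induction \<psi>)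
  case (LIneq cs c)
  have "(\<Sum>(a, g)\<leftarrow>map (\<lambda>(a, i). (a, \<sigma> i)) cs. real_of_int a * LE M g)
      = (\<Sum>(a, i)\<leftarrow>cs. real_of_int a * LE M (\<sigma> i))"
    by (induction cs) auto
  then show ?case by simp
qed auto

theorem soundness:
  assumes "AX_lp f" "lp_structure M"
  shows "lsat M f"
  using assms
proof (induction f rule: AX_lp.induct)
  case (Taut \<tau> \<sigma>) then show ?case by (simp add: lsat_pinst tautology_def)
next
  case (MP f g) then show ?case by (simp add: lsat_EImp)
next
  case (Ineq \<psi> \<sigma>) then show ?case by (simp add: lsat_linst lin_valid_def)
next
  case (E5 g1 g2) then show ?case using sound_E5 by (simp add: lsat_EGeq)
next
  case (E6 g1 g2) then show ?case using sound_E6[of M g1 g2] by (simp add: lsat_EGeq)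
next
  case (E7 a g b) then show ?case using sound_E7[of M a g b] by (simp add: lsat_EEq tminus_def)
next
  case (E8 a g b) then show ?case using sound_E8[of M a g b] by (simp add: lsat_EEq tminus_def)
qed


definition lin :: "'v set \<Rightarrow> ('v \<Rightarrow> 'a::linordered_field) \<Rightarrow> ('v \<Rightarrow> 'a) \<Rightarrow> 'a" where
  "lin V c x = (\<Sum>v\<in>V. c v * x v)"

definition csat :: "'v set \<Rightarrow> ('v \<Rightarrow> 'a::linordered_field) \<Rightarrow> ('v \<Rightarrow> 'a) \<times> 'a \<times> bool \<Rightarrow> bool" where
  "csat V x C = (if snd (snd C) then lin V (fst C) x > fst (snd C) else lin V (fst C) x \<ge> fst (snd C))"

inductive deriv :: "(('v \<Rightarrow> 'a::linordered_field) \<times> 'a \<times> bool) set \<Rightarrow> ('v \<Rightarrow> 'a) \<times> 'a \<times> bool \<Rightarrow> bool"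
  for Cs where
  dbase: "C \<in> Cs \<Longrightarrow> deriv Cs C"
| dadd: "deriv Cs (c1, d1, s1) \<Longrightarrow> deriv Cs (c2, d2, s2) \<Longrightarrow> deriv Cs (\<lambda>v. c1 v + c2 v, d1 + d2, s1 \<or> s2)"
| dscale: "deriv Cs (c, d, s) \<Longrightarrow> r > 0 \<Longrightarrow> deriv Cs (\<lambda>v. r * c v, r * d, s)"

lemma bounds_exist:
  fixes Lo Up :: "('a::linordered_field \<times> bool) set"
  assumes fl: "finite Lo" and fu: "finite Up"
    and pair: "\<And>l s1 h s2. (l,s1) \<in> Lo \<Longrightarrow> (h,s2) \<in> Up \<Longrightarrow> (if s1 \<or> s2 then l < h else l \<le> h)"
  shows "\<exists>t. (\<forall>(l,s)\<in>Lo. if s then l < t else l \<le> t) \<and> (\<forall>(h,s)\<in>Up. if s then t < h else t \<le> h)"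
proof (cases "Lo = {}")
  case True
  show ?thesis
  proof (cases "Up = {}")
    case True then show ?thesis using \<open>Lo = {}\<close> by auto
  next
    case False
    let ?U = "Min (fst ` Up)"
    have "\<forall>(h,s)\<in>Up. ?U - 1 < h"
    proof (clarify)
      fix h s assume "(h,s) \<in> Up"
      then have "?U \<le> h" using fu by (intro Min_le) force+
      then show "?U - 1 < h" by simp
    qed
    then show ?thesis using \<open>Lo = {}\<close> by (intro exI[of _ "?U - 1"]) (auto split: if_splits)
  qed
next
  case False
  let ?L = "Max (fst ` Lo)"
  have Lmax: "l \<le> ?L" if "(l,s) \<in> Lo" for l s using fl that by (intro Max_ge) force+
  obtain sL where Lin: "(?L, sL) \<in> Lo"
  proof -
    have "?L \<in> fst ` Lo" using fl False by (intro Max_in) auto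
    then show ?thesis using that by force
  qed
  show ?thesis
  proof (cases "Up = {}")
    case True
    have "\<forall>(l,s)\<in>Lo. l < ?L + 1" using Lmax by fastforce
    then show ?thesis using True by (intro exI[of _ "?L + 1"]) (auto split: if_splits)
  next
    case False
    let ?U = "Min (fst ` Up)"
    have Umin: "?U \<le> h" if "(h,s) \<in> Up" for h s using fu that by (intro Min_le) force+
    obtain sU where Uin: "(?U, sU) \<in> Up"
    proof -
      have "?U \<in> fst ` Up" using fu False by (intro Min_in) auto
      then show ?thesis using that by force
    qed
    have LU: "?L \<le> ?U" using pair[OF Lin Uin] by (auto split: if_splits)
    show ?thesis
    proof (cases "?L < ?U")
      case True
      let ?t = "(?L + ?U) / 2"
      have "?L < ?t" "?t < ?U" using True by (auto simp: field_simps)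
      then show ?thesis
        by (intro exI[of _ ?t]) (auto split: if_splits dest!: Lmax Umin)
    next
      case False
      then have eq: "?L = ?U" using LU by simp
      have A: "\<forall>(l,s)\<in>Lo. if s then l < ?L else l \<le> ?L"
      proof (clarify)
        fix l s assume ls: "(l,s) \<in> Lo"
        show "if s then l < ?L else l \<le> ?L"
        proof (cases s)
          case True
          have "l < ?U" using pair[OF ls Uin] True by simp
          then show ?thesis using True eq by simp
        qed (use Lmax[OF ls] in simp)
      qed
      have B: "\<forall>(h,s)\<in>Up. if s then ?L < h else ?L \<le> h"
      proof (clarify)
        fix h s assume hs: "(h,s) \<in> Up"
        show "if s then ?L < h else ?L \<le> h"
        proof (cases s)
          case True
          have "?L < h" using pair[OF Lin hs] True by simp
          then show ?thesis using True by simp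
        qed (use Umin[OF hs] eq in simp)
      qed
      show ?thesis using A B by blast
    qed
  qed
qed


lemma lin_insert:
  assumes "finite V" "u \<notin> V"
  shows "lin (insert u V) c (x(u := t)) = c u * t + lin V c x"
proof -
  have "(\<Sum>v\<in>V. c v * (x(u := t)) v) = (\<Sum>v\<in>V. c v * x v)"
    using assms(2) by (intro sum.cong) auto
  then show ?thesis using assms by (simp add: lin_def)
qed

lemma lin_comb: "lin V (\<lambda>v. a * c1 v + b * c2 v) x = a * lin V c1 x + b * lin V c2 x"
  by (simp add: lin_def sum.distrib sum_distrib_left distrib_right mult.assoc)

lemma deriv_trans:
  assumes "deriv Cs' D" "\<And>C. C \<in> Cs' \<Longrightarrow> deriv Cs C"
  shows "deriv Cs D"
  using assms by (induction rule: deriv.induct) (auto intro: deriv.intros)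

lemma deriv_zero:
  assumes "deriv Cs D" "\<And>C. C \<in> Cs \<Longrightarrow> fst C u = 0"
  shows "fst D u = 0"
  using assms by (induction rule: deriv.induct) auto

lemma pos_bound:
  fixes a L d t :: "'a::linordered_field"
  assumes "a > 0"
  shows "(a * t + L \<ge> d) = ((d - L) / a \<le> t)" "(a * t + L > d) = ((d - L) / a < t)"
  using assms by (auto simp: pos_divide_le_eq pos_divide_less_eq algebra_simps)

lemma neg_bound:
  fixes a L d t :: "'a::linordered_field"
  assumes "a < 0"
  shows "(a * t + L \<ge> d) = (t \<le> (d - L) / a)" "(a * t + L > d) = (t < (d - L) / a)"
  using assms by (auto simp: neg_le_divide_eq neg_less_divide_eq algebra_simps)

lemma pair_bound:
  fixes a n dP dN LP LN :: "'a::linordered_field"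
  assumes "a > 0" "n < 0"
  shows "((dP - LP) / a \<le> (dN - LN) / n) = ((- n) * dP + a * dN \<le> (- n) * LP + a * LN)"
    "((dP - LP) / a < (dN - LN) / n) = ((- n) * dP + a * dN < (- n) * LP + a * LN)"
proof -
  have "((dP - LP) / a \<le> (dN - LN) / n) = ((dP - LP) * n \<ge> (dN - LN) * a)"
    using assms by (simp add: divide_le_eq le_divide_eq mult.commute mult.left_commute)
  then show "((dP - LP) / a \<le> (dN - LN) / n) = ((- n) * dP + a * dN \<le> (- n) * LP + a * LN)"
    by (simp add: algebra_simps)
  have "((dP - LP) / a < (dN - LN) / n) = ((dP - LP) * n > (dN - LN) * a)"
    using assms by (simp add: divide_less_eq less_divide_eq mult.commute mult.left_commute)
  then show "((dP - LP) / a < (dN - LN) / n) = ((- n) * dP + a * dN < (- n) * LP + a * LN)"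
    by (simp add: algebra_simps)
qed


definition comb :: "'v \<Rightarrow> ('v \<Rightarrow> 'a) \<times> 'a \<times> bool \<Rightarrow> ('v \<Rightarrow> 'a) \<times> 'a \<times> bool \<Rightarrow> ('v \<Rightarrow> 'a::linordered_field) \<times> 'a \<times> bool" where
  "comb u P N = (\<lambda>v. (- fst N u) * fst P v + fst P u * fst N v,
                 (- fst N u) * fst (snd P) + fst P u * fst (snd N), snd (snd P) \<or> snd (snd N))"

theorem fourier_motzkin:
  fixes Cs :: "(('v \<Rightarrow> 'a::linordered_field) \<times> 'a \<times> bool) set"
  assumes "finite V" "finite Cs" "\<not> (\<exists>x. \<forall>C\<in>Cs. csat V x C)"
  shows "\<exists>c d s. deriv Cs (c, d, s) \<and> (\<forall>v\<in>V. c v = 0) \<and> (d > 0 \<or> (d \<ge> 0 \<and> s))"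
  using assms
proof (induction V arbitrary: Cs rule: finite_induct)
  case empty
  then obtain C where C: "C \<in> Cs" "\<not> csat {} (\<lambda>_. 0) C" by blast
  obtain c d s where Ceq: "C = (c,d,s)" by (cases C)
  have "d > 0 \<or> (d \<ge> 0 \<and> s)" using C(2) by (auto simp: Ceq csat_def lin_def split: if_splits)
  then show ?case using C(1) Ceq by (auto intro: dbase)
next
  case (insert u V)
  define pos where "pos = {C\<in>Cs. fst C u > 0}"
  define neg where "neg = {C\<in>Cs. fst C u < 0}"
  define Cs' where "Cs' = {C\<in>Cs. fst C u = 0} \<union> (\<lambda>(P,N). comb u P N) ` (pos \<times> neg)"
  have finCs': "finite Cs'" using insert.prems(1) by (simp add: Cs'_def pos_def neg_def)
  have infeas: "\<not> (\<exists>x. \<forall>C\<in>Cs'. csat V x C)"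
  proof
    assume "\<exists>x. \<forall>C\<in>Cs'. csat V x C"
    then obtain x where x: "\<And>C. C \<in> Cs' \<Longrightarrow> csat V x C" by blast
    define lo where "lo P = (fst (snd P) - lin V (fst P) x) / fst P u" for P :: "('v \<Rightarrow> 'a) \<times> 'a \<times> bool"
    define Lo where "Lo = (\<lambda>P. (lo P, snd (snd P))) ` pos"
    define Up where "Up = (\<lambda>N. (lo N, snd (snd N))) ` neg"
    have "\<exists>t. (\<forall>(l,s)\<in>Lo. if s then l < t else l \<le> t) \<and> (\<forall>(h,s)\<in>Up. if s then t < h else t \<le> h)"
    proof (rule bounds_exist)
      show "finite Lo" "finite Up" using insert.prems(1) by (auto simp: Lo_def Up_def pos_def neg_def)
    next
      fix l s1 h s2 assume "(l, s1) \<in> Lo" "(h, s2) \<in> Up"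
      then obtain P N where PN: "P \<in> pos" "N \<in> neg" "l = lo P" "s1 = snd (snd P)" "h = lo N" "s2 = snd (snd N)"
        by (auto simp: Lo_def Up_def)
      have "comb u P N \<in> Cs'" using PN by (auto simp: Cs'_def)
      then have cs: "csat V x (comb u P N)" by (rule x)
      have a: "fst P u > 0" and n: "fst N u < 0" using PN by (auto simp: pos_def neg_def)
      obtain cp dp sp where P: "P = (cp,dp,sp)" by (cases P)
      obtain cn dn sn where N: "N = (cn,dn,sn)" by (cases N)
      have ce: "comb u P N = (\<lambda>v. (- cn u) * cp v + cp u * cn v, (- cn u) * dp + cp u * dn, sp \<or> sn)"
        by (simp add: comb_def P N)
      have lc: "lin V (\<lambda>v. (- cn u) * cp v + cp u * cn v) x = (- cn u) * lin V cp x + cp u * lin V cn x"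
        by (rule lin_comb)
      have cs2: "if sp \<or> sn then 
          (- cn u) * dp + cp u * dn < (- cn u) * lin V cp x + cp u * lin V cn x
        else (- cn u) * dp + cp u * dn \<le> (- cn u) * lin V cp x + cp u * lin V cn x"
        using cs unfolding ce csat_def fst_conv snd_conv lc .
      have a': "cp u > 0" and n': "cn u < 0" using a n P N by auto
      show "if s1 \<or> s2 then l < h else l \<le> h"
        using cs2 unfolding PN lo_def P N fst_conv snd_conv by (simp only: pair_bound[OF a' n'])
    qed
    then obtain t where tL: "\<forall>(l,s)\<in>Lo. if s then l < t else l \<le> t"
      and tU: "\<forall>(h,s)\<in>Up. if s then t < h else t \<le> h" by blast
    have "\<forall>C\<in>Cs. csat (insert u V) (x(u := t)) C"
    proof
      fix C assume C: "C \<in> Cs"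
      obtain c d s where Ceq: "C = (c,d,s)" by (cases C)
      have L: "lin (insert u V) c (x(u := t)) = c u * t + lin V c x" using lin_insert[OF insert.hyps] .
      consider "c u = 0" | "c u > 0" | "c u < 0" by fastforce
      then show "csat (insert u V) (x(u := t)) C"
      proof cases
        case 1
        then have "C \<in> Cs'" using C Ceq by (auto simp: Cs'_def)
        then have "csat V x C" by (rule x)
        then show ?thesis using 1 L unfolding Ceq csat_def by auto
      next
        case 2
        then have "(lo C, s) \<in> Lo" using C Ceq by (auto simp: Lo_def pos_def)
        then have "if s then lo C < t else lo C \<le> t" using tL by auto
        then show ?thesis using 2 L unfolding Ceq csat_def lo_def by (auto simp: pos_bound split: if_splits)
      next
        case 3
        then have "(lo C, s) \<in> Up" using C Ceq by (auto simp: Up_def neg_def)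
        then have "if s then t < lo C else t \<le> lo C" using tU by auto
        then show ?thesis using 3 L unfolding Ceq csat_def lo_def by (auto simp: neg_bound split: if_splits)
      qed
    qed
    then show False using insert.prems(2) by blast
  qed
  obtain c d s where cds: "deriv Cs' (c,d,s)" "\<forall>v\<in>V. c v = 0" "d > 0 \<or> (d \<ge> 0 \<and> s)"
    using insert.IH[OF finCs' infeas] by blast
  have sub: "deriv Cs C" if "C \<in> Cs'" for C
  proof -
    from that consider "C \<in> Cs" | P N where "P \<in> pos" "N \<in> neg" "C = comb u P N"
      by (auto simp: Cs'_def)
    then show ?thesis
    proof cases
      case 1 then show ?thesis by (rule dbase)
    next
      case 2
      obtain cp dp sp where P: "P = (cp,dp,sp)" by (cases P)
      obtain cn dn sn where N: "N = (cn,dn,sn)" by (cases N)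
      have a: "cp u > 0" "- cn u > 0" using 2 P N by (auto simp: pos_def neg_def)
      have dP: "deriv Cs (cp,dp,sp)" "deriv Cs (cn,dn,sn)" using 2 P N
        by (auto simp: pos_def neg_def intro: dbase)
      show ?thesis using dadd[OF dscale[OF dP(1) a(2)] dscale[OF dP(2) a(1)]]
        by (simp add: 2 P N comb_def)
    qed
  qed
  have zu: "fst C u = 0" if "C \<in> Cs'" for C
    using that by (auto simp: Cs'_def comb_def pos_def neg_def mult.commute)
  have "c u = 0" using deriv_zero[OF cds(1) zu] by simp
  then show ?case using deriv_trans[OF cds(1) sub] cds(2,3) by auto
qed

lemma sum_ind:
  fixes f :: "'l \<Rightarrow> 'a::comm_ring_1"
  assumes "finite Ls" "l \<in> Ls"
  shows "(\<Sum>la\<in>Ls. (if la = l then 1 else 0) * f la) = f l"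
proof -
  have "(\<Sum>la\<in>Ls. (if la = l then 1 else 0) * f la) = (\<Sum>la\<in>Ls. if la = l then f la else 0)"
    by (rule sum.cong) auto
  also have "\<dots> = f l" using assms by simp
  finally show ?thesis .
qed

lemma deriv_mult:
  assumes "deriv (con ` Ls) D" "finite Ls"
  shows "\<exists>lam. (\<forall>l. lam l \<ge> 0) \<and> (\<forall>v. fst D v = (\<Sum>l\<in>Ls. lam l * fst (con l) v))
     \<and> fst (snd D) = (\<Sum>l\<in>Ls. lam l * fst (snd (con l)))
     \<and> (snd (snd D) \<longrightarrow> (\<exists>l\<in>Ls. lam l > 0 \<and> snd (snd (con l))))"
  using assms(1)
proof (induction rule: deriv.induct)
  case (dbase C)
  then obtain l where l: "l \<in> Ls" "C = con l" by blast
  show ?case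
    by (rule exI[of _ "\<lambda>l'. if l' = l then 1 else 0"]) (use l assms(2) in \<open>auto simp: sum_ind\<close>)
next
  case (dadd c1 d1 s1 c2 d2 s2)
  then obtain l1 l2 where l1: "\<forall>l. l1 l \<ge> 0" "\<forall>v. c1 v = (\<Sum>l\<in>Ls. l1 l * fst (con l) v)"
     "d1 = (\<Sum>l\<in>Ls. l1 l * fst (snd (con l)))" "s1 \<longrightarrow> (\<exists>l\<in>Ls. l1 l > 0 \<and> snd (snd (con l)))"
    and l2: "\<forall>l. l2 l \<ge> 0" "\<forall>v. c2 v = (\<Sum>l\<in>Ls. l2 l * fst (con l) v)"
     "d2 = (\<Sum>l\<in>Ls. l2 l * fst (snd (con l)))" "s2 \<longrightarrow> (\<exists>l\<in>Ls. l2 l > 0 \<and> snd (snd (con l)))"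
    by auto
  show ?case
  proof (rule exI[of _ "\<lambda>l. l1 l + l2 l"], intro conjI allI impI)
    fix l show "0 \<le> l1 l + l2 l" using l1(1) l2(1) by (simp add: add_nonneg_nonneg)
  next
    fix v show "fst (\<lambda>v. c1 v + c2 v, d1 + d2, s1 \<or> s2) v = (\<Sum>l\<in>Ls. (l1 l + l2 l) * fst (con l) v)"
      using l1(2) l2(2) by (simp add: distrib_right sum.distrib)
  next
    show "fst (snd (\<lambda>v. c1 v + c2 v, d1 + d2, s1 \<or> s2)) = (\<Sum>l\<in>Ls. (l1 l + l2 l) * fst (snd (con l)))"
      using l1(3) l2(3) by (simp add: distrib_right sum.distrib)
  next
    assume "snd (snd (\<lambda>v. c1 v + c2 v, d1 + d2, s1 \<or> s2))"
    then have "s1 \<or> s2" by simp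
    then show "\<exists>l\<in>Ls. 0 < l1 l + l2 l \<and> snd (snd (con l))"
    proof
      assume s1 then obtain l where "l \<in> Ls" "l1 l > 0" "snd (snd (con l))" using l1(4) by blast
      then show ?thesis using l2(1) by (intro bexI[of _ l]) (auto intro: add_pos_nonneg)
    next
      assume s2 then obtain l where "l \<in> Ls" "l2 l > 0" "snd (snd (con l))" using l2(4) by blast
      then show ?thesis using l1(1) by (intro bexI[of _ l]) (auto intro: add_nonneg_pos)
    qed
  qed
next
  case (dscale c d s r)
  then obtain l1 where l1: "\<forall>l. l1 l \<ge> 0" "\<forall>v. c v = (\<Sum>l\<in>Ls. l1 l * fst (con l) v)"
     "d = (\<Sum>l\<in>Ls. l1 l * fst (snd (con l)))" "s \<longrightarrow> (\<exists>l\<in>Ls. l1 l > 0 \<and> snd (snd (con l)))"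
    by auto
  show ?case
  proof (rule exI[of _ "\<lambda>l. r * l1 l"], intro conjI allI impI)
    fix l show "0 \<le> r * l1 l" using l1(1) dscale.hyps(2) by simp
  next
    fix v show "fst (\<lambda>v. r * c v, r * d, s) v = (\<Sum>l\<in>Ls. (r * l1 l) * fst (con l) v)"
      using l1(2) by (simp add: sum_distrib_left mult.assoc)
  next
    show "fst (snd (\<lambda>v. r * c v, r * d, s)) = (\<Sum>l\<in>Ls. (r * l1 l) * fst (snd (con l)))"
      using l1(3) by (simp add: sum_distrib_left mult.assoc)
  next
    assume "snd (snd (\<lambda>v. r * c v, r * d, s))"
    then obtain l where "l \<in> Ls" "l1 l > 0" "snd (snd (con l))" using l1(4) by auto
    then show "\<exists>l\<in>Ls. 0 < r * l1 l \<and> snd (snd (con l))" using dscale.hyps(2) by (meson mult_pos_pos)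
  qed
qed


definition tval :: "('p gamble \<Rightarrow> real) \<Rightarrow> 'p eterm \<Rightarrow> real" where
  "tval x t = (\<Sum>(a, g)\<leftarrow>t. real_of_int a * x g)"

primrec esat :: "('p gamble \<Rightarrow> real) \<Rightarrow> 'p lfml \<Rightarrow> bool" where
  "esat x (EIneq t b) = (tval x t \<ge> of_int b)"
| "esat x (ENeg f) = (\<not> esat x f)"
| "esat x (EAnd f g) = (esat x f \<and> esat x g)"

lemma lsat_esat: "lsat M f = esat (\<lambda>g. LE M g) f"
  by (induction f) (auto simp: tval_def)

lemma tval_Nil[simp]: "tval x [] = 0" by (simp add: tval_def)
lemma tval_Cons[simp]: "tval x ((a,g) # t) = of_int a * x g + tval x t" by (simp add: tval_def)
lemma tval_append[simp]: "tval x (t1 @ t2) = tval x t1 + tval x t2" by (simp add: tval_def)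
lemma tval_tneg[simp]: "tval x (tneg t) = - tval x t"
  by (induction t) (auto simp: tneg_def)

lemma esat_EGeq: "esat x (EGeq t1 t2) = (tval x t1 \<ge> tval x t2)"
  unfolding EGeq_def esat.simps tminus_def by simp
lemma esat_EEq: "esat x (EEq t b) = (tval x t = of_int b)"
  unfolding EEq_def ELe_def esat.simps by auto

primrec gams :: "'p lfml \<Rightarrow> 'p gamble list" where
  "gams (EIneq t b) = map snd t"
| "gams (ENeg f) = gams f"
| "gams (EAnd f g) = gams f @ gams g"

fun idx :: "'a list \<Rightarrow> 'a \<Rightarrow> nat" where
  "idx [] a = 0"
| "idx (b # L) a = (if b = a then 0 else Suc (idx L a))"

lemma idx_nth: "a \<in> set L \<Longrightarrow> L ! idx L a = a"
  by (induction L) auto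

lemma idx_less: "a \<in> set L \<Longrightarrow> idx L a < length L"
  by (induction L) auto

primrec abst :: "'p gamble list \<Rightarrow> 'p lfml \<Rightarrow> linfml" where
  "abst L (EIneq t b) = LIneq (map (\<lambda>(a, g). (a, idx L g)) t) b"
| "abst L (ENeg f) = LNeg (abst L f)"
| "abst L (EAnd f g) = LAnd (abst L f) (abst L g)"

lemma linst_abst: "set (gams f) \<subseteq> set L \<Longrightarrow> linst (\<lambda>i. L ! i) (abst L f) = f"
proof (induction f)
  case (EIneq t b)
  then have "map (\<lambda>(a, i). (a, L ! i)) (map (\<lambda>(a, g). (a, idx L g)) t) = t"
    by (induction t) (auto simp: idx_nth)
  then show ?case by simp
qed auto

lemma linsat_abst: "linsat y (abst L f) = esat (\<lambda>g. y (idx L g)) f"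
proof (induction f)
  case (EIneq t b)
  have "(\<Sum>(a, i)\<leftarrow>map (\<lambda>(a, g). (a, idx L g)) t. real_of_int a * y i) = tval (\<lambda>g. y (idx L g)) t"
    by (induction t) auto
  then show ?case by simp
qed auto

fun imps :: "'p lfml list \<Rightarrow> 'p lfml \<Rightarrow> 'p lfml" where
  "imps [] f = f"
| "imps (\<phi> # \<Phi>) f = EImp \<phi> (imps \<Phi> f)"

lemma esat_imps: "esat x (imps \<Phi> f) = ((\<forall>\<phi>\<in>set \<Phi>. esat x \<phi>) \<longrightarrow> esat x f)"
  by (induction \<Phi>) (auto simp: EImp_def)

lemma AX_imps: "AX_lp (imps \<Phi> f) \<Longrightarrow> \<forall>\<phi>\<in>set \<Phi>. AX_lp \<phi> \<Longrightarrow> AX_lp f"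
  by (induction \<Phi>) (auto intro: AX_lp.MP)

definition prov_ent :: "(('p gamble \<Rightarrow> real) \<Rightarrow> bool) \<Rightarrow> bool" where
  "prov_ent P \<longleftrightarrow> (\<exists>\<Phi>. (\<forall>\<phi>\<in>set \<Phi>. AX_lp \<phi>) \<and> (\<forall>x. (\<forall>\<phi>\<in>set \<Phi>. esat x \<phi>) \<longrightarrow> P x))"

lemma prov_ent_AX:
  assumes "prov_ent (\<lambda>x. esat x f)"
  shows "AX_lp f"
proof -
  obtain \<Phi> where ax: "\<forall>\<phi>\<in>set \<Phi>. AX_lp \<phi>" and ent: "\<forall>x. (\<forall>\<phi>\<in>set \<Phi>. esat x \<phi>) \<longrightarrow> esat x f"
    using assms unfolding prov_ent_def by blast
  let ?h = "imps \<Phi> f"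
  let ?L = "gams ?h"
  have "lin_valid (abst ?L ?h)"
    unfolding lin_valid_def linsat_abst esat_imps using ent by blast
  then have "AX_lp (linst (\<lambda>i. ?L ! i) (abst ?L ?h))" by (rule AX_lp.Ineq)
  then have "AX_lp ?h" using linst_abst[of ?h ?L] by simp
  then show ?thesis using AX_imps ax by blast
qed

lemma prov_ent_mono: "prov_ent P \<Longrightarrow> (\<And>x. P x \<Longrightarrow> Q x) \<Longrightarrow> prov_ent Q"
  unfolding prov_ent_def by blast

lemma prov_ent_conj:
  assumes "prov_ent P" "prov_ent Q"
  shows "prov_ent (\<lambda>x. P x \<and> Q x)"
proof -
  obtain \<Phi>1 where 1: "\<forall>\<phi>\<in>set \<Phi>1. AX_lp \<phi>" "\<forall>x. (\<forall>\<phi>\<in>set \<Phi>1. esat x \<phi>) \<longrightarrow> P x"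
    using assms(1) unfolding prov_ent_def by blast
  obtain \<Phi>2 where 2: "\<forall>\<phi>\<in>set \<Phi>2. AX_lp \<phi>" "\<forall>x. (\<forall>\<phi>\<in>set \<Phi>2. esat x \<phi>) \<longrightarrow> Q x"
    using assms(2) unfolding prov_ent_def by blast
  show ?thesis unfolding prov_ent_def
    by (rule exI[of _ "\<Phi>1 @ \<Phi>2"]) (use 1 2 in auto)
qed

lemma prov_ent_true: "prov_ent (\<lambda>x. True)"
  unfolding prov_ent_def by (rule exI[of _ "[]"]) simp

lemma prov_ent_ax: "AX_lp \<phi> \<Longrightarrow> prov_ent (\<lambda>x. esat x \<phi>)"
  unfolding prov_ent_def by (rule exI[of _ "[\<phi>]"]) simp

lemma prov_ent_all:
  assumes "finite I" "\<And>i. i \<in> I \<Longrightarrow> prov_ent (P i)"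
  shows "prov_ent (\<lambda>x. \<forall>i\<in>I. P i x)"
  using assms
proof (induction I rule: finite_induct)
  case empty then show ?case using prov_ent_true by simp
next
  case (insert a I)
  have "prov_ent (\<lambda>x. P a x \<and> (\<forall>i\<in>I. P i x))"
    using insert by (intro prov_ent_conj) auto
  then show ?case by (rule prov_ent_mono) auto
qed

lemma pe_E5: "gamble_le g1 g2 \<Longrightarrow> prov_ent (\<lambda>x. x g1 \<le> x g2)"
  using prov_ent_ax[OF AX_lp.E5] by (simp add: esat_EGeq)

lemma pe_E6: "prov_ent (\<lambda>x. x g1 + x g2 \<le> x (g1 @ g2))"
  using prov_ent_ax[OF AX_lp.E6[of g1 g2]] by (simp add: esat_EGeq gplus_def)

lemma pe_E7: "a \<ge> 0 \<Longrightarrow> prov_ent (\<lambda>x. x (gscale a g @ [(b, ptrue)]) = of_int a * x g + of_int b)"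
  using prov_ent_ax[OF AX_lp.E7[of a g b]] by (simp add: esat_EEq gplus_def tminus_def tneg_def algebra_simps)

lemma gamble_le_refl_eq: "(\<And>v. gval v g1 = gval v g2) \<Longrightarrow> gamble_le g1 g2 \<and> gamble_le g2 g1"
  by (simp add: gamble_le_def)

lemma pe_scale:
  assumes "a \<ge> 0"
  shows "prov_ent (\<lambda>x. x (gscale a g) = of_int a * x g)"
proof -
  let ?h = "gscale a g @ [(0, ptrue)]"
  have e: "gamble_le (gscale a g) ?h \<and> gamble_le ?h (gscale a g)"
    by (rule gamble_le_refl_eq) simp
  have "prov_ent (\<lambda>x. (x ?h = of_int a * x g + of_int 0 \<and> x (gscale a g) \<le> x ?h) \<and> x ?h \<le> x (gscale a g))"
    by (intro prov_ent_conj pe_E7 pe_E5) (use assms e in auto)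
  then show ?thesis by (rule prov_ent_mono) auto
qed

lemma pe_nil: "prov_ent (\<lambda>x. x [] \<ge> 0)"
proof -
  have e: "gamble_le [(0, ptrue)] []" by (simp add: gamble_le_def)
  have "prov_ent (\<lambda>x. x (gscale 0 [] @ [(0, ptrue)]) = of_int 0 * x [] + of_int 0 \<and> x [(0, ptrue)] \<le> x [])"
    by (intro prov_ent_conj pe_E7 pe_E5 e) simp
  then show ?thesis by (rule prov_ent_mono) (simp add: gscale_def)
qed

primrec gch :: "(nat \<Rightarrow> int) \<Rightarrow> (nat \<Rightarrow> 'p gamble) \<Rightarrow> nat \<Rightarrow> 'p gamble" where
  "gch B Y 0 = []"
| "gch B Y (Suc n) = gscale (B n) (Y n) @ gch B Y n"

lemma gval_gch: "gval v (gch B Y n) = (\<Sum>j<n. of_int (B j) * gval v (Y j))"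
  by (induction n) auto

lemma pe_chain:
  fixes B :: "nat \<Rightarrow> int" and n :: nat and Y :: "nat \<Rightarrow> 'p gamble"
  assumes "\<And>j. j < n \<Longrightarrow> B j \<ge> 0"
  shows "prov_ent (\<lambda>x. (\<Sum>j<n. of_int (B j) * x (Y j)) \<le> x (gch B Y n))"
  using assms
proof (induction n)
  case 0 then show ?case using pe_nil by simp
next
  case (Suc n)
  have "prov_ent (\<lambda>x. ((\<Sum>j<n. of_int (B j) * x (Y j)) \<le> x (gch B Y n)
     \<and> x (gscale (B n) (Y n)) = of_int (B n) * x (Y n))
     \<and> x (gscale (B n) (Y n)) + x (gch B Y n) \<le> x (gscale (B n) (Y n) @ gch B Y n))"
    by (intro prov_ent_conj pe_scale pe_E6 Suc.IH) (use Suc.prems in auto)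
  then show ?case by (rule prov_ent_mono) auto
qed

lemma cert_int:
  fixes B :: "nat \<Rightarrow> int" and n :: nat and Y :: "nat \<Rightarrow> 'p gamble"
  assumes B: "\<And>j. j < n \<Longrightarrow> B j \<ge> 0" and G: "\<Gamma> \<ge> 0"
    and le: "\<And>v. (\<Sum>j<n. of_int (B j) * gval v (Y j)) \<le> of_int \<Gamma> * gval v Z + of_int C"
  shows "prov_ent (\<lambda>x. (\<Sum>j<n. of_int (B j) * x (Y j)) \<le> of_int \<Gamma> * x Z + of_int C)"
proof -
  let ?H = "gscale \<Gamma> Z @ [(C, ptrue)]"
  have gl: "gamble_le (gch B Y n) ?H" using le by (simp add: gamble_le_def gval_gch)
  have "prov_ent (\<lambda>x. ((\<Sum>j<n. of_int (B j) * x (Y j)) \<le> x (gch B Y n) \<and> x (gch B Y n) \<le> x ?H)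
     \<and> x ?H = of_int \<Gamma> * x Z + of_int C)"
    by (intro prov_ent_conj pe_chain pe_E5 gl pe_E7 G) (use B in auto)
  then show ?thesis by (rule prov_ent_mono) auto
qed

lemma common_denom:
  assumes "finite S"
  shows "\<exists>D::int. D > 0 \<and> (\<forall>q\<in>S. \<exists>z::int. of_int D * q = (of_int z :: rat))"
  using assms
proof (induction S rule: finite_induct)
  case empty then show ?case by (intro exI[of _ 1]) simp
next
  case (insert q S)
  then obtain D where D: "D > 0" "\<forall>p\<in>S. \<exists>z::int. of_int D * p = (of_int z :: rat)" by blast
  obtain a b where ab: "quotient_of q = (a, b)" by (cases "quotient_of q")
  have b: "b > 0" using quotient_of_denom_pos[OF ab] .
  have q: "q = of_int a / of_int b" using quotient_of_div[OF ab] .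
  show ?case
  proof (rule exI[of _ "D * b"], intro conjI ballI)
    show "D * b > 0" using D b by simp
  next
    fix p assume "p \<in> insert q S"
    then show "\<exists>z::int. of_int (D * b) * p = of_int z"
    proof
      assume "p = q"
      then show ?thesis using b by (intro exI[of _ "D * a"]) (simp add: q)
    next
      assume "p \<in> S"
      then obtain z where "of_int D * p = (of_int z :: rat)" using D by blast
      then show ?thesis by (intro exI[of _ "z * b"]) (simp add: algebra_simps)
    qed
  qed
qed

lemma cert_rat:
  fixes \<beta> :: "nat \<Rightarrow> rat" and \<gamma> c :: rat and n :: nat and Y :: "nat \<Rightarrow> 'p gamble"
  assumes beta: "\<And>j. j < n \<Longrightarrow> \<beta> j \<ge> 0" and gam: "\<gamma> \<ge> 0"
    and le: "\<And>v. (\<Sum>j<n. of_rat (\<beta> j) * gval v (Y j)) \<le> of_rat \<gamma> * gval v Z + of_rat c"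
  shows "prov_ent (\<lambda>x. (\<Sum>j<n. of_rat (\<beta> j) * x (Y j)) \<le> of_rat \<gamma> * x Z + of_rat c)"
proof -
  obtain D where D: "D > 0" "\<forall>q\<in>\<beta> ` {..<n} \<union> {\<gamma>, c}. \<exists>z::int. of_int D * q = (of_int z :: rat)"
    using common_denom[of "\<beta> ` {..<n} \<union> {\<gamma>, c}"] by auto
  have "\<forall>j. \<exists>z::int. j < n \<longrightarrow> of_int D * \<beta> j = of_int z" using D(2) by auto
  then obtain B where B: "\<And>j. j < n \<Longrightarrow> of_int D * \<beta> j = of_int (B j)" by metis
  obtain G where G: "of_int D * \<gamma> = of_int G" using D(2) by auto
  obtain C where C: "of_int D * c = of_int C" using D(2) by auto
  have Dr: "real_of_int D > 0" using D(1) by simp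
  have Bj: "real_of_int (B j) = of_int D * of_rat (\<beta> j)" if "j < n" for j
  proof -
    have "real_of_int (B j) = of_rat (of_int (B j))" by simp
    also have "\<dots> = of_rat (of_int D * \<beta> j)" using B[OF that] by simp
    finally show ?thesis by (simp add: of_rat_mult)
  qed
  have Gr: "real_of_int G = of_int D * of_rat \<gamma>"
  proof -
    have "real_of_int G = of_rat (of_int G)" by simp
    also have "\<dots> = of_rat (of_int D * \<gamma>)" using G by simp
    finally show ?thesis by (simp add: of_rat_mult)
  qed
  have Cr: "real_of_int C = of_int D * of_rat c"
  proof -
    have "real_of_int C = of_rat (of_int C)" by simp
    also have "\<dots> = of_rat (of_int D * c)" using C by simp
    finally show ?thesis by (simp add: of_rat_mult)
  qed
  have sumB: "(\<Sum>j<n. of_int (B j) * f j) = of_int D * (\<Sum>j<n. of_rat (\<beta> j) * f j)" for f :: "nat \<Rightarrow> real"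
    by (simp add: sum_distrib_left Bj mult.assoc)
  have B0: "B j \<ge> 0" if "j < n" for j
  proof -
    have "real_of_int (B j) \<ge> 0" using Bj[OF that] beta[OF that] Dr by (simp add: zero_le_of_rat_iff)
    then show ?thesis by simp
  qed
  have G0: "G \<ge> 0"
  proof -
    have "real_of_int G \<ge> 0" using Gr gam Dr by (simp add: zero_le_of_rat_iff)
    then show ?thesis by simp
  qed
  have "prov_ent (\<lambda>x. (\<Sum>j<n. of_int (B j) * x (Y j)) \<le> of_int G * x Z + of_int C)"
  proof (rule cert_int[OF B0 G0])
    fix v
    have "of_int D * (\<Sum>j<n. of_rat (\<beta> j) * gval v (Y j)) \<le> of_int D * (of_rat \<gamma> * gval v Z + of_rat c)"
      using le[of v] Dr by (simp add: mult_left_mono)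
    then show "(\<Sum>j<n. of_int (B j) * gval v (Y j)) \<le> of_int G * gval v Z + of_int C"
      by (simp add: sumB Gr Cr algebra_simps)
  qed auto
  then show ?thesis
  proof (rule prov_ent_mono)
    fix x :: "'p gamble \<Rightarrow> real"
    assume "(\<Sum>j<n. of_int (B j) * x (Y j)) \<le> of_int G * x Z + of_int C"
    then have "of_int D * (\<Sum>j<n. of_rat (\<beta> j) * x (Y j)) \<le> of_int D * (of_rat \<gamma> * x Z + of_rat c)"
      by (simp add: sumB Gr Cr algebra_simps)
    then show "(\<Sum>j<n. of_rat (\<beta> j) * x (Y j)) \<le> of_rat \<gamma> * x Z + of_rat c"
      using Dr by simp
  qed
qed


type_synonym 'p cell = "('p eterm \<times> int \<times> bool) list"

definition csatE :: "('p gamble \<Rightarrow> real) \<Rightarrow> 'p eterm \<times> int \<times> bool \<Rightarrow> bool" where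
  "csatE x C = (case C of (t, b, s) \<Rightarrow> if s then tval x t > of_int b else tval x t \<ge> of_int b)"

definition ivl :: "('p \<Rightarrow> bool) \<Rightarrow> 'p gamble \<Rightarrow> int" where
  "ivl v g = (\<Sum>(b, f)\<leftarrow>g. b * (if peval v f then 1 else 0))"

lemma gval_ivl: "gval v g = of_int (ivl v g)"
  by (induction g) (auto simp: gval_def ivl_def)

definition KK :: "'p cell \<Rightarrow> 'p gamble list" where
  "KK cl = [] # concat (map (\<lambda>(t, b, s). map snd t) cl)"

definition PR :: "'p cell \<Rightarrow> 'p set" where
  "PR cl = (\<Union>g\<in>set (KK cl). gprops g)"

lemma finite_PR[simp]: "finite (PR cl)" by (simp add: PR_def)

lemma KK_ne: "length (KK cl) > 0" by (simp add: KK_def)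

datatype 'p var = VX nat | VP nat "'p set"
datatype 'p lab = LPos nat "'p set" | LS1 nat | LS2 nat | LQ3 nat nat | LQ4 nat | LR nat

definition vq :: "'p cell \<Rightarrow> nat \<Rightarrow> 'p set \<Rightarrow> 'a::linordered_field" where
  "vq cl j A = of_int (ivl (\<lambda>q. q \<in> A) (KK cl ! j))"

definition rc :: "'p cell \<Rightarrow> 'p eterm \<Rightarrow> nat \<Rightarrow> 'a::linordered_field" where
  "rc cl t j = (\<Sum>(a, g)\<leftarrow>t. if idx (KK cl) g = j then of_int a else 0)"

fun conc :: "'p cell \<Rightarrow> 'p lab \<Rightarrow> 'p var \<Rightarrow> 'a::linordered_field" where
  "conc cl (LPos i A) v = (if v = VP i A then 1 else 0)"
| "conc cl (LS1 i) (VP i' A) = (if i' = i then 1 else 0)"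
| "conc cl (LS1 i) (VX j) = 0"
| "conc cl (LS2 i) (VP i' A) = (if i' = i then -1 else 0)"
| "conc cl (LS2 i) (VX j) = 0"
| "conc cl (LQ3 i j) (VP i' A) = (if i' = i then vq cl j A else 0)"
| "conc cl (LQ3 i j) (VX j') = (if j' = j then -1 else 0)"
| "conc cl (LQ4 i) (VP i' A) = (if i' = i then - vq cl i A else 0)"
| "conc cl (LQ4 i) (VX j') = (if j' = i then 1 else 0)"
| "conc cl (LR l) (VX j) = rc cl (fst (cl ! l)) j"
| "conc cl (LR l) (VP i A) = 0"

fun cond :: "'p cell \<Rightarrow> 'p lab \<Rightarrow> 'a::linordered_field" where
  "cond cl (LS1 i) = 1"
| "cond cl (LS2 i) = -1"
| "cond cl (LR l) = of_int (fst (snd (cl ! l)))"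
| "cond cl _ = 0"

fun cons :: "'p cell \<Rightarrow> 'p lab \<Rightarrow> bool" where
  "cons cl (LR l) = snd (snd (cl ! l))"
| "cons cl _ = False"

definition con :: "'p cell \<Rightarrow> 'p lab \<Rightarrow> ('p var \<Rightarrow> 'a::linordered_field) \<times> 'a \<times> bool" where
  "con cl l = (conc cl l, cond cl l, cons cl l)"

definition Vs :: "'p cell \<Rightarrow> 'p var set" where
  "Vs cl = VX ` {..<length (KK cl)} \<union> (\<lambda>(i, A). VP i A) ` ({..<length (KK cl)} \<times> Pow (PR cl))"

definition Ls :: "'p cell \<Rightarrow> 'p lab set" where
  "Ls cl = (\<lambda>(i, A). LPos i A) ` ({..<length (KK cl)} \<times> Pow (PR cl)) \<union> LS1 ` {..<length (KK cl)}
     \<union> LS2 ` {..<length (KK cl)} \<union> (\<lambda>(i, j). LQ3 i j) ` ({..<length (KK cl)} \<times> {..<length (KK cl)})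
     \<union> LQ4 ` {..<length (KK cl)} \<union> LR ` {..<length cl}"

lemma finite_Vs: "finite (Vs cl)" by (simp add: Vs_def)
lemma finite_Ls: "finite (Ls cl)" by (simp add: Ls_def)

lemma sumV:
  fixes f :: "'p var \<Rightarrow> 'a::comm_monoid_add"
  shows "(\<Sum>v\<in>Vs cl. f v) = (\<Sum>j<length (KK cl). f (VX j)) + (\<Sum>i<length (KK cl). \<Sum>A\<in>Pow (PR cl). f (VP i A))"
proof -
  let ?k = "length (KK cl)"
  have d: "VX ` {..<?k} \<inter> (\<lambda>(i, A). VP i A) ` ({..<?k} \<times> Pow (PR cl)) = {}" by auto
  have i1: "inj_on VX {..<?k}" by (auto simp: inj_on_def)
  have i2: "inj_on (\<lambda>(i, A). VP i A) ({..<?k} \<times> Pow (PR cl))" by (auto simp: inj_on_def)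
  have "(\<Sum>v\<in>Vs cl. f v) = (\<Sum>v\<in>VX ` {..<?k}. f v) + (\<Sum>v\<in>(\<lambda>(i, A). VP i A) ` ({..<?k} \<times> Pow (PR cl)). f v)"
    unfolding Vs_def by (rule sum.union_disjoint) (use d in auto)
  also have "\<dots> = (\<Sum>j<?k. f (VX j)) + (\<Sum>(i,A)\<in>{..<?k} \<times> Pow (PR cl). f (VP i A))"
  proof -
    have "(\<Sum>v\<in>(\<lambda>(i, A). VP i A) ` ({..<?k} \<times> Pow (PR cl)). f v) = (\<Sum>(i,A)\<in>{..<?k} \<times> Pow (PR cl). f (VP i A))"
      by (subst sum.reindex[OF i2]) (auto simp: comp_def case_prod_beta)
    then show ?thesis by (simp add: sum.reindex[OF i1])
  qed
  also have "\<dots> = (\<Sum>j<?k. f (VX j)) + (\<Sum>i<?k. \<Sum>A\<in>Pow (PR cl). f (VP i A))"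
    by (simp add: sum.cartesian_product)
  finally show ?thesis .
qed

lemma sumL:
  fixes f :: "'p lab \<Rightarrow> 'a::comm_monoid_add"
  shows "(\<Sum>l\<in>Ls cl. f l) = (\<Sum>i<length (KK cl). \<Sum>A\<in>Pow (PR cl). f (LPos i A))
     + (\<Sum>i<length (KK cl). f (LS1 i)) + (\<Sum>i<length (KK cl). f (LS2 i))
     + (\<Sum>i<length (KK cl). \<Sum>j<length (KK cl). f (LQ3 i j)) + (\<Sum>i<length (KK cl). f (LQ4 i))
     + (\<Sum>l<length cl. f (LR l))"
proof -
  let ?k = "length (KK cl)"
  let ?S1 = "(\<lambda>(i, A). LPos i A) ` ({..<?k} \<times> Pow (PR cl))"
  let ?S2 = "LS1 ` {..<?k}"
  let ?S3 = "LS2 ` {..<?k}"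
  let ?S4 = "(\<lambda>(i, j). LQ3 i j) ` ({..<?k} \<times> {..<?k})"
  let ?S5 = "LQ4 ` {..<?k}"
  let ?S6 = "LR ` {..<length cl}"
  have fin: "finite ?S1" "finite ?S2" "finite ?S3" "finite ?S4" "finite ?S5" "finite ?S6" by auto
  have "(\<Sum>l\<in>Ls cl. f l) = (\<Sum>l\<in>?S1. f l) + (\<Sum>l\<in>?S2. f l) + (\<Sum>l\<in>?S3. f l) + (\<Sum>l\<in>?S4. f l)
     + (\<Sum>l\<in>?S5. f l) + (\<Sum>l\<in>?S6. f l)"
    unfolding Ls_def
    by (subst sum.union_disjoint, use fin in auto)+
  also have "\<dots> = (\<Sum>i<?k. \<Sum>A\<in>Pow (PR cl). f (LPos i A))
     + (\<Sum>i<?k. f (LS1 i)) + (\<Sum>i<?k. f (LS2 i))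
     + (\<Sum>i<?k. \<Sum>j<?k. f (LQ3 i j)) + (\<Sum>i<?k. f (LQ4 i))
     + (\<Sum>l<length cl. f (LR l))"
    by (simp add: sum.reindex inj_on_def case_prod_beta sum.cartesian_product)
  finally show ?thesis .
qed


lemma sum_if_eq:
  fixes f :: "'b \<Rightarrow> 'a::comm_ring_1"
  assumes "finite S"
  shows "(\<Sum>x\<in>S. (if x = a then c else 0) * f x) = (if a \<in> S then c * f a else 0)"
    "(\<Sum>x\<in>S. (if a = x then c else 0) * f x) = (if a \<in> S then c * f a else 0)"
proof -
  have "(\<Sum>x\<in>S. (if x = a then c else 0) * f x) = (\<Sum>x\<in>S. if x = a then c * f x else 0)"
    by (rule sum.cong) auto
  then show "(\<Sum>x\<in>S. (if x = a then c else 0) * f x) = (if a \<in> S then c * f a else 0)"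
    using assms by simp
  have "(\<Sum>x\<in>S. (if a = x then c else 0) * f x) = (\<Sum>x\<in>S. if a = x then c * f x else 0)"
    by (rule sum.cong) auto
  then show "(\<Sum>x\<in>S. (if a = x then c else 0) * f x) = (if a \<in> S then c * f a else 0)"
    using assms by simp
qed

context
  fixes cl :: "'p cell"
begin

abbreviation "k \<equiv> length (KK cl)"

lemma lin_LPos:
  fixes y :: "'p var \<Rightarrow> 'a::linordered_field"
  assumes "i < k" "A \<in> Pow (PR cl)"
  shows "lin (Vs cl) (conc cl (LPos i A)) y = y (VP i A)"
proof -
  have "(\<Sum>i'<k. \<Sum>A'\<in>Pow (PR cl). (if VP i' A' = VP i A then 1 else 0) * y (VP i' A'))
      = (\<Sum>i'<k. if i' = i then y (VP i A) else 0)"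
  proof (rule sum.cong[OF refl])
    fix i' 
    have "(\<Sum>A'\<in>Pow (PR cl). (if VP i' A' = VP i A then 1 else 0) * y (VP i' A'))
       = (\<Sum>A'\<in>Pow (PR cl). (if i' = i then (if A' = A then 1 else 0) else 0) * y (VP i' A'))"
      by (rule sum.cong) auto
    also have "\<dots> = (if i' = i then y (VP i A) else 0)"
      using assms by (auto simp: sum_if_eq)
    finally show "(\<Sum>A'\<in>Pow (PR cl). (if VP i' A' = VP i A then 1 else 0) * y (VP i' A'))
       = (if i' = i then y (VP i A) else 0)" .
  qed
  then show ?thesis using assms unfolding lin_def sumV by simp
qed

lemma lin_LS1:
  fixes y :: "'p var \<Rightarrow> 'a::linordered_field"
  assumes "i < k"
  shows "lin (Vs cl) (conc cl (LS1 i)) y = (\<Sum>A\<in>Pow (PR cl). y (VP i A))"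
proof -
  have "(\<Sum>i'<k. \<Sum>A\<in>Pow (PR cl). (if i' = i then 1 else 0) * y (VP i' A))
     = (\<Sum>i'<k. if i' = i then (\<Sum>A\<in>Pow (PR cl). y (VP i' A)) else 0)"
    by (rule sum.cong) auto
  then show ?thesis using assms unfolding lin_def sumV by simp
qed

lemma lin_LS2:
  fixes y :: "'p var \<Rightarrow> 'a::linordered_field"
  assumes "i < k"
  shows "lin (Vs cl) (conc cl (LS2 i)) y = - (\<Sum>A\<in>Pow (PR cl). y (VP i A))"
proof -
  have "(\<Sum>i'<k. \<Sum>A\<in>Pow (PR cl). (if i' = i then -1 else 0) * y (VP i' A))
     = (\<Sum>i'<k. if i' = i then - (\<Sum>A\<in>Pow (PR cl). y (VP i' A)) else 0)"
    by (rule sum.cong) (auto simp: sum_negf)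
  then show ?thesis using assms unfolding lin_def sumV by simp
qed

lemma lin_LQ3:
  fixes y :: "'p var \<Rightarrow> 'a::linordered_field"
  assumes "i < k" "j < k"
  shows "lin (Vs cl) (conc cl (LQ3 i j)) y = (\<Sum>A\<in>Pow (PR cl). vq cl j A * y (VP i A)) - y (VX j)"
proof -
  have "(\<Sum>i'<k. \<Sum>A\<in>Pow (PR cl). (if i' = i then vq cl j A else 0) * y (VP i' A))
     = (\<Sum>i'<k. if i' = i then (\<Sum>A\<in>Pow (PR cl). vq cl j A * y (VP i' A)) else 0)"
    by (rule sum.cong) auto
  then show ?thesis using assms unfolding lin_def sumV by (simp add: sum_if_eq)
qed

lemma lin_LQ4:
  fixes y :: "'p var \<Rightarrow> 'a::linordered_field"
  assumes "i < k"
  shows "lin (Vs cl) (conc cl (LQ4 i)) y = y (VX i) - (\<Sum>A\<in>Pow (PR cl). vq cl i A * y (VP i A))"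
proof -
  have "(\<Sum>i'<k. \<Sum>A\<in>Pow (PR cl). (if i' = i then - vq cl i A else 0) * y (VP i' A))
     = (\<Sum>i'<k. if i' = i then - (\<Sum>A\<in>Pow (PR cl). vq cl i A * y (VP i' A)) else 0)"
    by (rule sum.cong) (auto simp: sum_negf)
  then show ?thesis using assms unfolding lin_def sumV by (simp add: sum_if_eq)
qed

lemma rc_sum:
  fixes z :: "nat \<Rightarrow> 'a::linordered_field"
  assumes "set (map snd t) \<subseteq> set (KK cl)"
  shows "(\<Sum>j<k. rc cl t j * z j) = (\<Sum>(a, g)\<leftarrow>t. of_int a * z (idx (KK cl) g))"
  using assms
proof (induction t)
  case Nil then show ?case by (simp add: rc_def)
next
  case (Cons ag t)
  obtain a g where ag: "ag = (a, g)" by (cases ag)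
  have g: "idx (KK cl) g < k" using Cons.prems ag by (auto intro: idx_less)
  have "(\<Sum>j<k. rc cl (ag # t) j * z j) = (\<Sum>j<k. (if idx (KK cl) g = j then of_int a else 0) * z j) + (\<Sum>j<k. rc cl t j * z j)"
    by (simp add: rc_def ag distrib_right sum.distrib)
  also have "\<dots> = of_int a * z (idx (KK cl) g) + (\<Sum>j<k. rc cl t j * z j)"
    using g by (simp add: sum_if_eq)
  finally show ?case using Cons by (simp add: ag)
qed

lemma lin_LR:
  fixes y :: "'p var \<Rightarrow> 'a::linordered_field"
  assumes "l < length cl"
  shows "lin (Vs cl) (conc cl (LR l)) y = (\<Sum>j<k. rc cl (fst (cl ! l)) j * y (VX j))"
  using assms unfolding lin_def sumV by simp

lemma KK_sub: 
  assumes "l < length cl" shows "set (map snd (fst (cl ! l))) \<subseteq> set (KK cl)"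
proof -
  obtain t b s where e: "cl ! l = (t,b,s)" by (cases "cl ! l")
  have m: "(t,b,s) \<in> set cl" using assms e nth_mem by metis
  have "set (map snd t) \<subseteq> set (concat (map (\<lambda>(t, b, s). map snd t) cl))"
    using m by (induction cl) auto
  then show ?thesis unfolding KK_def e fst_conv by (rule subset_trans[OF _ set_subset_Cons])
qed

lemma coefVP:
  fixes lam :: "'p lab \<Rightarrow> 'a::linordered_field"
  assumes "i < k" "A \<in> Pow (PR cl)"
  shows "(\<Sum>l\<in>Ls cl. lam l * conc cl l (VP i A)) = lam (LPos i A) + lam (LS1 i) - lam (LS2 i)
     + (\<Sum>j<k. lam (LQ3 i j) * vq cl j A) - lam (LQ4 i) * vq cl i A"
proof -
  have 1: "(\<Sum>i'<k. \<Sum>A'\<in>Pow (PR cl). lam (LPos i' A') * conc cl (LPos i' A') (VP i A)) = lam (LPos i A)"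
  proof -
    have "(\<Sum>i'<k. \<Sum>A'\<in>Pow (PR cl). lam (LPos i' A') * conc cl (LPos i' A') (VP i A))
       = (\<Sum>i'<k. if i' = i then lam (LPos i A) else 0)"
    proof (rule sum.cong[OF refl])
      fix i'
      have "(\<Sum>A'\<in>Pow (PR cl). lam (LPos i' A') * conc cl (LPos i' A') (VP i A))
        = (\<Sum>A'\<in>Pow (PR cl). (if i' = i then (if A' = A then 1 else 0) else 0) * lam (LPos i' A'))"
        by (rule sum.cong) auto
      also have "\<dots> = (if i' = i then lam (LPos i A) else 0)"
        using assms by (auto simp: sum_if_eq)
      finally show "(\<Sum>A'\<in>Pow (PR cl). lam (LPos i' A') * conc cl (LPos i' A') (VP i A))
        = (if i' = i then lam (LPos i A) else 0)" .
    qed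
    then show ?thesis using assms by simp
  qed
  have 4: "(\<Sum>i'<k. \<Sum>j<k. lam (LQ3 i' j) * conc cl (LQ3 i' j) (VP i A)) = (\<Sum>j<k. lam (LQ3 i j) * vq cl j A)"
  proof -
    have "(\<Sum>i'<k. \<Sum>j<k. lam (LQ3 i' j) * conc cl (LQ3 i' j) (VP i A))
       = (\<Sum>i'<k. if i' = i then (\<Sum>j<k. lam (LQ3 i j) * vq cl j A) else 0)"
      by (rule sum.cong) auto
    then show ?thesis using assms by simp
  qed
  have 2: "(\<Sum>i'<k. lam (LS1 i') * conc cl (LS1 i') (VP i A)) = lam (LS1 i)"
    using assms by (simp add: mult.commute[of "lam _"] sum_if_eq)
  have 3: "(\<Sum>i'<k. lam (LS2 i') * conc cl (LS2 i') (VP i A)) = - lam (LS2 i)"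
  proof -
    have "(\<Sum>i'<k. lam (LS2 i') * conc cl (LS2 i') (VP i A)) = (\<Sum>i'<k. if i' = i then - lam (LS2 i) else 0)"
      by (rule sum.cong) auto
    then show ?thesis using assms by simp
  qed
  have 5: "(\<Sum>i'<k. lam (LQ4 i') * conc cl (LQ4 i') (VP i A)) = - lam (LQ4 i) * vq cl i A"
  proof -
    have "(\<Sum>i'<k. lam (LQ4 i') * conc cl (LQ4 i') (VP i A)) = (\<Sum>i'<k. if i' = i then - lam (LQ4 i) * vq cl i A else 0)"
      by (rule sum.cong) auto
    then show ?thesis using assms by simp
  qed
  have 6: "(\<Sum>l<length cl. lam (LR l) * conc cl (LR l) (VP i A)) = 0" by simp
  show ?thesis unfolding sumL 1 2 3 4 5 6 by simp
qed

end


lemma csat_con: "csat V x (con cl l) = (if cons cl l then lin V (conc cl l) x > cond cl l else lin V (conc cl l) x \<ge> cond cl l)"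
  by (simp add: csat_def con_def)

lemma gprops_KK: "j < length (KK cl) \<Longrightarrow> gprops (KK cl ! j) \<subseteq> PR cl"
  unfolding PR_def by (auto intro: nth_mem)

lemma gval_vq:
  assumes "j < length (KK cl)" 
  shows "gval v (KK cl ! j) = of_rat (vq cl j {q\<in>PR cl. v q})"
proof -
  have "gval v (KK cl ! j) = gval (\<lambda>q. q \<in> {q\<in>PR cl. v q}) (KK cl ! j)"
    by (rule gval_cong) (use gprops_KK[OF assms] in auto)
  then show ?thesis by (simp add: vq_def gval_ivl)
qed

lemma gval_vq': 
  assumes "j < length (KK cl)" "A \<subseteq> PR cl" shows "gval (\<lambda>q. q \<in> A) (KK cl ! j) = of_rat (vq cl j A)"
proof -
  have "{q\<in>PR cl. q \<in> A} = A" using assms(2) by auto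
  then show ?thesis using gval_vq[OF assms(1), of "\<lambda>q. q \<in> A"] by simp
qed

lemma feasible_model:
  fixes cl :: "'p cell" and x :: "'p var \<Rightarrow> rat"
  assumes inf: "infinite (UNIV :: 'v set)" and feas: "\<forall>l\<in>Ls cl. csat (Vs cl) x (con cl l)"
  shows "\<exists>M :: ('v,'p) lp_struct. lp_structure M \<and> (\<forall>c\<in>set cl. csatE (\<lambda>g. LE M g) c)"
proof -
  let ?k = "length (KK cl)"
  let ?Pr = "PR cl"
  let ?Ats = "Pow (PR cl)"
  have finA: "finite ?Ats" by simp
  have kpos: "?k > 0" by (rule KK_ne)
  have f_pos: "x (VP i A) \<ge> 0" if "i < ?k" "A \<in> ?Ats" for i A
  proof -
    have "LPos i A \<in> Ls cl" using that by (auto simp: Ls_def)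
    then have "csat (Vs cl) x (con cl (LPos i A))" using feas by auto
    then show ?thesis using lin_LPos[OF that, of x] unfolding csat_con by simp
  qed
  have f_sum: "(\<Sum>A\<in>?Ats. x (VP i A)) = 1" if "i < ?k" for i
  proof -
    have "LS1 i \<in> Ls cl" "LS2 i \<in> Ls cl" using that by (auto simp: Ls_def)
    then have "csat (Vs cl) x (con cl (LS1 i))" "csat (Vs cl) x (con cl (LS2 i))" using feas by auto
    then show ?thesis using lin_LS1[OF that, of x] lin_LS2[OF that, of x]
      unfolding csat_con by simp
  qed
  have f_q3: "(\<Sum>A\<in>?Ats. vq cl j A * x (VP i A)) \<ge> x (VX j)" if "i < ?k" "j < ?k" for i j
  proof -
    have "LQ3 i j \<in> Ls cl" using that by (auto simp: Ls_def)
    then have "csat (Vs cl) x (con cl (LQ3 i j))" using feas by auto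
    then show ?thesis using lin_LQ3[OF that, of x] unfolding csat_con by simp
  qed
  have f_q4: "(\<Sum>A\<in>?Ats. vq cl i A * x (VP i A)) \<le> x (VX i)" if "i < ?k" for i
  proof -
    have "LQ4 i \<in> Ls cl" using that by (auto simp: Ls_def)
    then have "csat (Vs cl) x (con cl (LQ4 i))" using feas by auto
    then show ?thesis using lin_LQ4[OF that, of x] unfolding csat_con by simp
  qed
  have f_r: "if snd (snd (cl ! l)) then (\<Sum>j<?k. rc cl (fst (cl ! l)) j * x (VX j)) > of_int (fst (snd (cl ! l)))
             else (\<Sum>j<?k. rc cl (fst (cl ! l)) j * x (VX j)) \<ge> of_int (fst (snd (cl ! l)))"
    if "l < length cl" for l
  proof -
    have "LR l \<in> Ls cl" using that by (auto simp: Ls_def)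
    then have "csat (Vs cl) x (con cl (LR l))" using feas by auto
    then show ?thesis using lin_LR[OF that, of x] unfolding csat_con cond.simps cons.simps
      by (auto split: if_splits)
  qed
  obtain f :: "'p set \<Rightarrow> nat" where f: "inj_on f ?Ats" using finite_imp_inj_to_nat_seg[OF finA] by metis
  have "\<exists>g::nat \<Rightarrow> 'v. inj g \<and> range g \<subseteq> UNIV"
    using infinite_iff_countable_subset[of "UNIV :: 'v set"] inf by argo
  then obtain g :: "nat \<Rightarrow> 'v" where g: "inj g" by metis
  define emb where "emb = g \<circ> f"
  have emb: "inj_on emb ?Ats" unfolding emb_def inj_on_def
  proof (intro ballI impI)
    fix A B assume "A \<in> ?Ats" "B \<in> ?Ats" "(g \<circ> f) A = (g \<circ> f) B"
    then show "A = B" using f g by (simp add: inj_on_def inj_def)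
  qed
  define p where "p i A = real_of_rat (x (VP i A))" for i A
  define \<mu> where "\<mu> i S = (\<Sum>A\<in>{A\<in>?Ats. emb A \<in> S}. p i A)" for i S
  define M :: "('v,'p) lp_struct" where
    "M = \<lparr>lpW = emb ` ?Ats, lpF = Pow (emb ` ?Ats), lpP = \<mu> ` {..<?k},
          lpPi = (\<lambda>w q. q \<in> inv_into ?Ats emb w)\<rparr>"
  have piM: "lpPi M (emb A) q = (q \<in> A)" if "A \<in> ?Ats" for A q
    using that emb by (simp add: M_def)
  have pm: "prob_measure_on (emb ` ?Ats) (Pow (emb ` ?Ats)) (\<mu> i)" if i: "i < ?k" for i
    unfolding prob_measure_on_def
  proof (intro conjI ballI impI)
    fix S show "0 \<le> \<mu> i S" unfolding \<mu>_def p_def using f_pos[OF i] by (auto intro!: sum_nonneg)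
  next
    have "{A\<in>?Ats. emb A \<in> emb ` ?Ats} = ?Ats" by auto
    then show "\<mu> i (emb ` ?Ats) = 1" unfolding \<mu>_def p_def
      using f_sum[OF i] by (simp add: of_rat_sum[symmetric])
  next
    fix S T assume "S \<in> Pow (emb ` ?Ats)" "T \<in> Pow (emb ` ?Ats)" and d: "S \<inter> T = {}"
    have "{A\<in>?Ats. emb A \<in> S \<union> T} = {A\<in>?Ats. emb A \<in> S} \<union> {A\<in>?Ats. emb A \<in> T}" by auto
    moreover have "{A\<in>?Ats. emb A \<in> S} \<inter> {A\<in>?Ats. emb A \<in> T} = {}" using d by auto
    ultimately show "\<mu> i (S \<union> T) = \<mu> i S + \<mu> i T" unfolding \<mu>_def
      by (simp add: sum.union_disjoint)
  qed
  have M: "lp_structure M"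
    unfolding lp_structure_def
  proof (intro conjI ballI allI)
    have "{} \<in> ?Ats" by simp
    then show "lpW M \<noteq> {}" unfolding M_def by (metis empty_iff image_eqI lp_struct.select_convs(1))
    show "algebra (lpW M) (lpF M)" by (simp add: M_def algebra_Pow)
    show "lpP M \<noteq> {}" using kpos by (auto simp: M_def)
  next
    fix m assume "m \<in> lpP M"
    then show "prob_measure_on (lpW M) (lpF M) m" using pm by (auto simp: M_def)
  next
    fix q show "{w \<in> lpW M. lpPi M w q} \<in> lpF M" by (auto simp: M_def)
  qed
  have acell: "acell M ?Pr A = {emb A}" if "A \<in> ?Ats" for A
  proof
    show "acell M ?Pr A \<subseteq> {emb A}"
    proof
      fix w assume "w \<in> acell M ?Pr A"
      then obtain A' where A': "A' \<in> ?Ats" "w = emb A'" "{q\<in>?Pr. lpPi M w q} = A"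
        by (auto simp: acell_def M_def)
      then have "{q\<in>?Pr. q \<in> A'} = A" using piM by simp
      then have "A' = A" using A'(1) by auto
      then show "w \<in> {emb A}" using A' by simp
    qed
  next
    have "{q\<in>?Pr. lpPi M (emb A) q} = A" using piM[OF that] that by auto
    then show "{emb A} \<subseteq> acell M ?Pr A" using that by (auto simp: acell_def M_def)
  qed
  have musing: "\<mu> i {emb A} = p i A" if "A \<in> ?Ats" for i A
  proof -
    have "{A'\<in>?Ats. emb A' \<in> {emb A}} = {A}" using that emb by (auto dest: inj_onD)
    then show ?thesis by (simp add: \<mu>_def)
  qed
  have exM: "ex M ?Pr (\<mu> i) (KK cl ! j) = of_rat (\<Sum>A\<in>?Ats. vq cl j A * x (VP i A))" if "j < ?k" for i j
  proof -
    have "ex M ?Pr (\<mu> i) (KK cl ! j) = (\<Sum>A\<in>?Ats. gval (\<lambda>q. q \<in> A) (KK cl ! j) * p i A)"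
      unfolding ex_def by (rule sum.cong) (auto simp: acell musing)
    also have "\<dots> = (\<Sum>A\<in>?Ats. of_rat (vq cl j A * x (VP i A)))"
      by (rule sum.cong) (auto simp: gval_vq'[OF that] p_def of_rat_mult)
    finally show ?thesis by (simp add: of_rat_sum)
  qed
  have LEj: "LE M (KK cl ! j) = of_rat (x (VX j))" if j: "j < ?k" for j
  proof -
    have "LE M (KK cl ! j) = (INF m\<in>lpP M. ex M ?Pr m (KK cl ! j))"
      by (rule lower_expect_ex[OF M finite_PR gprops_KK[OF j]])
    also have "\<dots> = Inf ((\<lambda>i. ex M ?Pr (\<mu> i) (KK cl ! j)) ` {..<?k})"
      by (simp add: M_def image_image)
    also have "\<dots> = of_rat (x (VX j))"
    proof (rule cInf_eq_minimum)
      have "(\<Sum>A\<in>?Ats. vq cl j A * x (VP j A)) = x (VX j)" using f_q3[OF j j] f_q4[OF j] by simp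
      then show "of_rat (x (VX j)) \<in> (\<lambda>i. ex M ?Pr (\<mu> i) (KK cl ! j)) ` {..<?k}"
        using j exM[OF j, of j] by (intro image_eqI[of _ _ j]) auto
    next
      fix r assume "r \<in> (\<lambda>i. ex M ?Pr (\<mu> i) (KK cl ! j)) ` {..<?k}"
      then obtain i where "i < ?k" "r = ex M ?Pr (\<mu> i) (KK cl ! j)" by auto
      then show "of_rat (x (VX j)) \<le> r" using exM[OF j] f_q3[OF _ j] by (simp add: of_rat_less_eq)
    qed
    finally show ?thesis .
  qed
  have tv: "tval (\<lambda>g. LE M g) t = of_rat (\<Sum>(a, g)\<leftarrow>t. of_int a * x (VX (idx (KK cl) g)))"
    if "set (map snd t) \<subseteq> set (KK cl)" for t
    using that
  proof (induction t)
    case (Cons ag t)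
    obtain a g where ag: "ag = (a, g)" by (cases ag)
    have g: "g \<in> set (KK cl)" using Cons.prems ag by auto
    have "LE M g = of_rat (x (VX (idx (KK cl) g)))"
      using LEj[OF idx_less[OF g]] idx_nth[OF g] by simp
    then show ?case using Cons by (simp add: ag of_rat_add of_rat_mult)
  qed simp
  have "\<forall>c\<in>set cl. csatE (\<lambda>g. LE M g) c"
  proof
    fix c assume "c \<in> set cl"
    then obtain l where l: "l < length cl" "cl ! l = c" by (meson in_set_conv_nth)
    obtain t b s where e: "cl ! l = (t, b, s)" by (cases "cl ! l")
    have sub: "set (map snd t) \<subseteq> set (KK cl)" using KK_sub[OF l(1)] e by simp
    let ?S = "(\<Sum>(a, g)\<leftarrow>t. of_int a * x (VX (idx (KK cl) g)))"
    have fr: "if s then ?S > of_int b else ?S \<ge> of_int b"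
      using f_r[OF l(1)] unfolding e fst_conv snd_conv rc_sum[OF sub] .
    have tvS: "tval (\<lambda>g. LE M g) t = of_rat ?S" using tv[OF sub] .
    show "csatE (\<lambda>g. LE M g) c"
    proof (cases s)
      case True
      then have "of_int b < ?S" using fr by simp
      then have "of_rat (of_int b) < (of_rat ?S :: real)" by (simp only: of_rat_less)
      then have "real_of_int b < tval (\<lambda>g. LE M g) t" unfolding tvS by simp
      then show ?thesis using True by (simp add: csatE_def l(2)[symmetric] e)
    next
      case False
      then have "of_int b \<le> ?S" using fr by simp
      then have "of_rat (of_int b) \<le> (of_rat ?S :: real)" by (simp only: of_rat_less_eq)
      then have "real_of_int b \<le> tval (\<lambda>g. LE M g) t" unfolding tvS by simp
      then show ?thesis using False by (simp add: csatE_def l(2)[symmetric] e)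
    qed
  qed
  then show ?thesis using M by blast
qed


lemma rc_rat: "(of_rat (rc cl t j :: rat) :: real) = rc cl t j"
  by (induction t) (auto simp: rc_def of_rat_add)

lemma conc_rat: "(of_rat (conc cl l v :: rat) :: real) = conc cl l v"
  by (cases "(cl, l, v)" rule: conc.cases) (auto simp: vq_def rc_rat of_rat_minus)

lemma cond_rat: "(of_rat (cond cl l :: rat) :: real) = cond cl l"
  by (cases "(cl, l)" rule: cond.cases) auto

lemma LR_Ls: "LR l \<in> Ls cl \<Longrightarrow> l < length cl"
  by (auto simp: Ls_def)

lemma cons_LR: "cons cl l \<Longrightarrow> \<exists>l'. l = LR l'"
  by (cases "(cl, l)" rule: cons.cases) auto

lemma tval_idx: "set (map snd t) \<subseteq> set L \<Longrightarrow> (\<Sum>(a, g)\<leftarrow>t. of_int a * x (L ! idx L g)) = tval x t"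
  by (induction t) (auto simp: idx_nth)

lemma infeasible_cert:
  fixes cl :: "'p cell"
  assumes infeas: "\<not> (\<exists>x::'p var \<Rightarrow> rat. \<forall>C\<in>con cl ` Ls cl. csat (Vs cl) x C)"
  shows "prov_ent (\<lambda>x. \<not> (\<forall>c\<in>set cl. csatE x c))"
proof -
  have "finite (con cl ` Ls cl :: (('p var \<Rightarrow> rat) \<times> rat \<times> bool) set)" by (rule finite_imageI[OF finite_Ls])
  then obtain c d s where cds: "deriv (con cl ` Ls cl) (c,d,s)" "\<forall>v\<in>Vs cl. c v = (0::rat)" "d > 0 \<or> (d \<ge> 0 \<and> s)"
    using fourier_motzkin[OF finite_Vs _ infeas] by blast
  obtain lam where lam: "\<forall>l. lam l \<ge> 0" "\<forall>v. c v = (\<Sum>l\<in>Ls cl. lam l * conc cl l v)"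
      "d = (\<Sum>l\<in>Ls cl. lam l * cond cl l)" "s \<longrightarrow> (\<exists>l\<in>Ls cl. lam l > 0 \<and> cons cl l)"
    using deriv_mult[OF cds(1) finite_Ls] by (auto simp: con_def)
  let ?k = "length (KK cl)"
  define cc where "cc i = lam (LS2 i) - lam (LS1 i)" for i
  have cert: "prov_ent (\<lambda>x. (\<Sum>j<?k. of_rat (lam (LQ3 i j)) * x (KK cl ! j))
        \<le> of_rat (lam (LQ4 i)) * x (KK cl ! i) + of_rat (cc i))" if i: "i < ?k" for i
  proof (rule cert_rat)
    show "\<And>j. j < ?k \<Longrightarrow> 0 \<le> lam (LQ3 i j)" using lam(1) by simp
    show "0 \<le> lam (LQ4 i)" using lam(1) by simp
    fix v
    let ?A = "{q \<in> PR cl. v q}"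
    have A: "?A \<in> Pow (PR cl)" by auto
    have "VP i ?A \<in> Vs cl" using i A by (auto simp: Vs_def)
    then have "c (VP i ?A) = 0" using cds(2) by simp
    then have eq: "lam (LPos i ?A) + lam (LS1 i) - lam (LS2 i) + (\<Sum>j<?k. lam (LQ3 i j) * vq cl j ?A)
        - lam (LQ4 i) * vq cl i ?A = 0"
      using lam(2) coefVP[OF i A, of lam] by simp
    have rat: "(\<Sum>j<?k. lam (LQ3 i j) * vq cl j ?A) \<le> lam (LQ4 i) * vq cl i ?A + cc i"
    proof -
      have "lam (LPos i ?A) \<ge> 0" using lam(1) by simp
      then show ?thesis using eq unfolding cc_def by linarith
    qed
    have "(\<Sum>j<?k. of_rat (lam (LQ3 i j)) * gval v (KK cl ! j)) = (\<Sum>j<?k. of_rat (lam (LQ3 i j) * vq cl j ?A))"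
      by (rule sum.cong) (auto simp: gval_vq of_rat_mult)
    also have "\<dots> = of_rat (\<Sum>j<?k. lam (LQ3 i j) * vq cl j ?A)" by (simp add: of_rat_sum)
    finally have 1: "(\<Sum>j<?k. of_rat (lam (LQ3 i j)) * gval v (KK cl ! j)) = of_rat (\<Sum>j<?k. lam (LQ3 i j) * vq cl j ?A)" .
    have 2: "of_rat (lam (LQ4 i)) * gval v (KK cl ! i) + of_rat (cc i) = of_rat (lam (LQ4 i) * vq cl i ?A + cc i)"
      using i by (simp add: gval_vq of_rat_add of_rat_mult)
    show "(\<Sum>j<?k. of_rat (lam (LQ3 i j)) * gval v (KK cl ! j)) \<le> of_rat (lam (LQ4 i)) * gval v (KK cl ! i) + of_rat (cc i)"
      unfolding 1 2 of_rat_less_eq by (rule rat)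
  qed
  have "prov_ent (\<lambda>x. \<forall>i\<in>{..<?k}. (\<Sum>j<?k. of_rat (lam (LQ3 i j)) * x (KK cl ! j))
        \<le> of_rat (lam (LQ4 i)) * x (KK cl ! i) + of_rat (cc i))"
    by (rule prov_ent_all) (auto intro: cert)
  then show ?thesis
  proof (rule prov_ent_mono)
    fix x :: "'p gamble \<Rightarrow> real"
    assume H: "\<forall>i\<in>{..<?k}. (\<Sum>j<?k. of_rat (lam (LQ3 i j)) * x (KK cl ! j))
        \<le> of_rat (lam (LQ4 i)) * x (KK cl ! i) + of_rat (cc i)"
    show "\<not> (\<forall>c\<in>set cl. csatE x c)"
    proof
      assume cell: "\<forall>c\<in>set cl. csatE x c"
      define y where "y v = (case v of VX j \<Rightarrow> x (KK cl ! j) | VP i A \<Rightarrow> 0)" for v :: "'p var"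
      define F where "F l = of_rat (lam l) * (lin (Vs cl) (conc cl l) y - cond cl l)" for l
      have z: "(\<Sum>l\<in>Ls cl. of_rat (lam l) * lin (Vs cl) (conc cl l) y) = 0"
      proof -
        have "(\<Sum>l\<in>Ls cl. of_rat (lam l) * lin (Vs cl) (conc cl l) y)
            = (\<Sum>l\<in>Ls cl. \<Sum>v\<in>Vs cl. of_rat (lam l) * conc cl l v * y v)"
          unfolding lin_def by (simp add: sum_distrib_left mult.assoc)
        also have "\<dots> = (\<Sum>v\<in>Vs cl. \<Sum>l\<in>Ls cl. of_rat (lam l) * conc cl l v * y v)"
          by (rule sum.swap)
        also have "\<dots> = (\<Sum>v\<in>Vs cl. of_rat (\<Sum>l\<in>Ls cl. lam l * conc cl l v) * y v)"
          by (simp add: sum_distrib_right of_rat_sum of_rat_mult conc_rat)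
        also have "\<dots> = 0" using cds(2) lam(2) by simp
        finally show ?thesis .
      qed
      have dd: "(\<Sum>l\<in>Ls cl. of_rat (lam l) * cond cl l) = (of_rat d :: real)"
        using lam(3) by (simp add: of_rat_sum of_rat_mult cond_rat)
      have tot: "(\<Sum>l\<in>Ls cl. F l) = - of_rat d"
        unfolding F_def using z dd by (simp add: right_diff_distrib sum_subtractf)
      have FPos: "F (LPos i A) = 0" if "i < ?k" "A \<in> Pow (PR cl)" for i A
        unfolding F_def lin_LPos[OF that] by (simp add: y_def)
      have FQ: "F (LS1 i) + F (LS2 i) + (\<Sum>j<?k. F (LQ3 i j)) + F (LQ4 i)
          = of_rat (cc i) - (\<Sum>j<?k. of_rat (lam (LQ3 i j)) * x (KK cl ! j)) + of_rat (lam (LQ4 i)) * x (KK cl ! i)"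
        if i: "i < ?k" for i
      proof -
        have 1: "F (LS1 i) = - of_rat (lam (LS1 i))" unfolding F_def lin_LS1[OF i] by (simp add: y_def)
        have 2: "F (LS2 i) = of_rat (lam (LS2 i))" unfolding F_def lin_LS2[OF i] by (simp add: y_def)
        have 3: "F (LQ3 i j) = - (of_rat (lam (LQ3 i j)) * x (KK cl ! j))" if "j < ?k" for j
          unfolding F_def lin_LQ3[OF i that] by (simp add: y_def)
        have 4: "F (LQ4 i) = of_rat (lam (LQ4 i)) * x (KK cl ! i)"
          unfolding F_def lin_LQ4[OF i] by (simp add: y_def)
        have "(\<Sum>j<?k. F (LQ3 i j)) = - (\<Sum>j<?k. of_rat (lam (LQ3 i j)) * x (KK cl ! j))"
          using 3 by (simp add: sum_negf)
        then show ?thesis using 1 2 4 by (simp add: cc_def of_rat_diff)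
      qed
      have FR: "F (LR l) = of_rat (lam (LR l)) * (tval x (fst (cl ! l)) - of_int (fst (snd (cl ! l))))"
        if l: "l < length cl" for l
      proof -
        have sub: "set (map snd (fst (cl ! l))) \<subseteq> set (KK cl)" by (rule KK_sub[OF l])
        have "(\<Sum>j<?k. rc cl (fst (cl ! l)) j * y (VX j))
              = (\<Sum>(a, g)\<leftarrow>fst (cl ! l). of_int a * y (VX (idx (KK cl) g)))"
          by (rule rc_sum[OF sub])
        also have "\<dots> = tval x (fst (cl ! l))"
          using tval_idx[OF sub, of x] by (simp add: y_def)
        finally have "(\<Sum>j<?k. rc cl (fst (cl ! l)) j * y (VX j)) = tval x (fst (cl ! l))" .
        then show ?thesis unfolding F_def lin_LR[OF l] by simp
      qed
      have Qnn: "0 \<le> F (LS1 i) + F (LS2 i) + (\<Sum>j<?k. F (LQ3 i j)) + F (LQ4 i)" if "i < ?k" for i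
      proof -
        have "(\<Sum>j<?k. of_rat (lam (LQ3 i j)) * x (KK cl ! j)) \<le> of_rat (lam (LQ4 i)) * x (KK cl ! i) + of_rat (cc i)"
          using H that by simp
        then show ?thesis unfolding FQ[OF that] by linarith
      qed
      have cl_l: "csatE x (cl ! l)" if "l < length cl" for l using cell that by simp
      have Rnn: "0 \<le> F (LR l)" if l: "l < length cl" for l
      proof -
        have "of_int (fst (snd (cl ! l))) \<le> tval x (fst (cl ! l))"
          using cl_l[OF l] by (auto simp: csatE_def split: prod.splits if_splits)
        then show ?thesis unfolding FR[OF l] using lam(1) by simp
      qed
      have Rpos: "0 < F (LR l)" if l: "l < length cl" and p: "lam (LR l) > 0" and st: "snd (snd (cl ! l))" for l
      proof -
        have "of_int (fst (snd (cl ! l))) < tval x (fst (cl ! l))"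
          using cl_l[OF l] st by (auto simp: csatE_def split: prod.splits if_splits)
        then show ?thesis unfolding FR[OF l] using p by simp
      qed
      have P0: "(\<Sum>i<?k. \<Sum>A\<in>Pow (PR cl). F (LPos i A)) = 0" by (simp add: FPos)
      have sumF: "(\<Sum>l\<in>Ls cl. F l) = (\<Sum>i<?k. (F (LS1 i) + F (LS2 i) + (\<Sum>j<?k. F (LQ3 i j)) + F (LQ4 i)))
          + (\<Sum>l<length cl. F (LR l))"
        unfolding sumL P0 by (simp add: sum.distrib)
      have Qs: "0 \<le> (\<Sum>i<?k. (F (LS1 i) + F (LS2 i) + (\<Sum>j<?k. F (LQ3 i j)) + F (LQ4 i)))"
        by (rule sum_nonneg) (use Qnn in auto)
      have Rs: "0 \<le> (\<Sum>l<length cl. F (LR l))" by (rule sum_nonneg) (use Rnn in auto)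
      from cds(3) show False
      proof
        assume "d > 0"
        then have "(of_rat d :: real) > 0" by simp
        then show False using tot sumF Qs Rs by linarith
      next
        assume ds: "d \<ge> 0 \<and> s"
        then obtain l where l: "l \<in> Ls cl" "lam l > 0" "cons cl l" using lam(4) by blast
        obtain l' where l': "l = LR l'" using cons_LR[OF l(3)] by blast
        have l'len: "l' < length cl" using LR_Ls l(1) l' by blast
        have "0 < F (LR l')" using Rpos[OF l'len] l l' by simp
        also have "F (LR l') \<le> (\<Sum>l<length cl. F (LR l))"
          by (rule member_le_sum) (use l'len Rnn in auto)
        finally have "0 < (\<Sum>l<length cl. F (LR l))" .
        moreover have "(of_rat d :: real) \<ge> 0" using ds by simp
        ultimately show False using tot sumF Qs by linarith
      qed
    qed
  qed
qed


primrec fatoms :: "'p lfml \<Rightarrow> ('p eterm \<times> int) list" where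
  "fatoms (EIneq t b) = [(t, b)]"
| "fatoms (ENeg f) = fatoms f"
| "fatoms (EAnd f g) = fatoms f @ fatoms g"

lemma esat_cong_atoms:
  "(\<And>a. a \<in> set (fatoms f) \<Longrightarrow> (tval x (fst a) \<ge> of_int (snd a)) = (tval y (fst a) \<ge> of_int (snd a)))
   \<Longrightarrow> esat x f = esat y f"
  by (induction f) auto

definition cellT :: "'p lfml \<Rightarrow> ('p eterm \<times> int) set \<Rightarrow> 'p cell" where
  "cellT f T = map (\<lambda>(t, b). if (t, b) \<in> T then (t, b, False) else (tneg t, - b, True)) (fatoms f)"

lemma csatE_cell:
  "csatE x ((\<lambda>(t, b). if (t, b) \<in> T then (t, b, False) else (tneg t, - b, True)) a)
   = ((tval x (fst a) \<ge> of_int (snd a)) = (a \<in> T))"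
proof (cases a)
  case (Pair t b)
  then show ?thesis by (cases "(t, b) \<in> T") (auto simp: csatE_def)
qed

lemma cell_iff:
  "(\<forall>c\<in>set (cellT f T). csatE x c) = (\<forall>a\<in>set (fatoms f). (tval x (fst a) \<ge> of_int (snd a)) = (a \<in> T))"
  unfolding cellT_def set_map ball_simps csatE_cell by (simp only: csatE_cell)

theorem completeness:
  fixes f :: "'p lfml"
  assumes inf: "infinite (UNIV :: 'v set)" and valid: "lp_valid TYPE('v) f"
  shows "AX_lp f"
proof (rule prov_ent_AX)
  have cellT_ent: "prov_ent (\<lambda>x. (\<forall>c\<in>set (cellT f T). csatE x c) \<longrightarrow> esat x f)" for T
  proof (cases "\<forall>x. (\<forall>c\<in>set (cellT f T). csatE x c) \<longrightarrow> esat x f")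
    case True
    show ?thesis by (rule prov_ent_mono[OF prov_ent_true]) (use True in blast)
  next
    case False
    then obtain x0 where x0: "\<forall>c\<in>set (cellT f T). csatE x0 c" "\<not> esat x0 f" by blast
    let ?cl = "cellT f T"
    show ?thesis
    proof (cases "\<exists>xr::'p var \<Rightarrow> rat. \<forall>C\<in>con ?cl ` Ls ?cl. csat (Vs ?cl) xr C")
      case True
      then obtain xr :: "'p var \<Rightarrow> rat" where "\<forall>l\<in>Ls ?cl. csat (Vs ?cl) xr (con ?cl l)" by auto
      from feasible_model[OF inf this] obtain M :: "('v, 'p) lp_struct"
        where M: "lp_structure M" "\<forall>c\<in>set ?cl. csatE (\<lambda>g. LE M g) c" by blast
      have "esat (\<lambda>g. LE M g) f = esat x0 f"
        by (rule esat_cong_atoms) (use M(2) x0(1) in \<open>simp add: cell_iff\<close>)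
      moreover have "lsat M f" using valid M(1) by (simp add: lp_valid_def)
      ultimately show ?thesis using x0(2) by (simp add: lsat_esat)
    next
      case False
      show ?thesis by (rule prov_ent_mono[OF infeasible_cert[OF False]]) blast
    qed
  qed
  have "prov_ent (\<lambda>x. \<forall>T\<in>Pow (set (fatoms f)). (\<forall>c\<in>set (cellT f T). csatE x c) \<longrightarrow> esat x f)"
    by (rule prov_ent_all) (auto intro: cellT_ent)
  then show "prov_ent (\<lambda>x. esat x f)"
  proof (rule prov_ent_mono)
    fix x assume H: "\<forall>T\<in>Pow (set (fatoms f)). (\<forall>c\<in>set (cellT f T). csatE x c) \<longrightarrow> esat x f"
    let ?T = "{a \<in> set (fatoms f). tval x (fst a) \<ge> of_int (snd a)}"
    have "\<forall>c\<in>set (cellT f ?T). csatE x c" unfolding cell_iff by auto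
    then show "esat x f" using H by auto
  qed
qed

theorem theorem5p2:
  fixes f :: "'p lfml"
  shows "(AX_lp f \<longrightarrow> lp_valid TYPE('w) f) \<and>
         (infinite (UNIV :: 'v set) \<longrightarrow> lp_valid TYPE('v) f \<longrightarrow> AX_lp f)"
proof (intro conjI impI)
  assume "AX_lp f"
  then show "lp_valid TYPE('w) f" unfolding lp_valid_def using soundness by blast
next
  assume "infinite (UNIV :: 'v set)" "lp_valid TYPE('v) f"
  then show "AX_lp f" by (rule completeness)
qed


end
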